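(* Let $\mathcal V$ be a set of size $v$, $2\le k\le v-2$, and suppose that the code $\Gamma\subset\binom{\mathcal V}{k}$ admits a subgroup $G\le{\rm Aut}(\Gamma)\cap{\rm Sym}(\mathcal V)$ such that $\Gamma$ is $G$-neighbour-transitive and $G$ is transitive and imprimitive on $\mathcal V$. Then $\Gamma$ is one of the following: (B) for some partition $\mathcal U=\{U_1|\dots|U_b\}$ of $\mathcal V$ into $b$ parts of size $a$ with $v=ab$, $a>1$, $b>1$, $\Gamma$ is the set of all $k$-subsets $\gamma$ with $\mathcal U$-type $\mathsf t_{\mathcal U}(\gamma)=\mathsf t$, where $(\mathsf t,\text{condition})$ is one of: 1. $\{k\}$, $k\le a$; 2. $\{k-v+a,a^{b-1}\}$, $k\ge v-a$; 3. $\{1^k\}$, $k\le b$; 4. $\{(a-1)^{v-k},a^{b-v+k}\}$, $k\ge v-b$; 5. $\{c^b\}$, $k=cb$ with $1<c\le a-1$; 6. $\{\frac{k-1}2,\frac{k+1}2\}$, $k$ odd, $a\ge3$, $b=2$; 7. $\{1,2^{(k-1)/2}\}$, $k$ odd, $a=2$, $b\ge3$; (C) for some partition $\mathcal U=\{U_1|\dots|U_b\}$ of $\mathcal V$ into $b$ parts of size $a$ with $v=ab$, $a>1$, $b\ge4$, with $k=ak_0$, $1\le k_0\le b-1$, and some $\Gamma_0\subseteq\binom{\mathcal U}{k_0}$, $\Gamma$ is the set of all $k$-subsets $\bigcup_{U\in\gamma_0}U$ with $\gamma_0\in\Gamma_0$.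
   Context: The Johnson graph $J(v,k)$ has vertex set $\binom{\mathcal V}{k}$, two $k$-subsets adjacent iff they meet in $k-1$ points. A code is a proper non-empty subset $\Gamma\subset\binom{\mathcal V}{k}$; its neighbour set $\Gamma_1$ is the set of $k$-subsets not in $\Gamma$ adjacent to some codeword; ${\rm Aut}(\Gamma)$ is the setwise stabiliser of $\Gamma$ in ${\rm Aut}(J(v,k))$; $\Gamma$ is $G$-neighbour-transitive if $G$ is transitive on both $\Gamma$ and $\Gamma_1$. The $\mathcal U$-type $\mathsf t_{\mathcal U}(\gamma)$ of $\gamma\subseteq\mathcal V$ is the multiset of the numbers $|\gamma\cap U_i|$, written exponentially ($i^m$: $m$ parts meet $\gamma$ in $i$ points) with zero entries omitted. *)

theory Defs
  imports Main "HOL-Library.Disjoint_Sets" "HOL-Library.Multiset" "HOL-Combinatorics.Permutations"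
begin

definition ksubsets :: "'a set \<Rightarrow> nat \<Rightarrow> 'a set set" where
  "ksubsets V k = {x. x \<subseteq> V \<and> card x = k}"

definition johnson_adj :: "nat \<Rightarrow> 'a set \<Rightarrow> 'a set \<Rightarrow> bool" where
  "johnson_adj k x y \<longleftrightarrow> card (x \<inter> y) = k - 1"

definition is_code :: "'a set \<Rightarrow> nat \<Rightarrow> 'a set set \<Rightarrow> bool" where
  "is_code V k C \<longleftrightarrow> C \<subseteq> ksubsets V k \<and> C \<noteq> {} \<and> C \<noteq> ksubsets V k"

definition neighbours :: "'a set \<Rightarrow> nat \<Rightarrow> 'a set set \<Rightarrow> 'a set set" where
  "neighbours V k C = {y \<in> ksubsets V k. y \<notin> C \<and> (\<exists>x\<in>C. johnson_adj k x y)}"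

text \<open>G is a subgroup of Sym(V) (permutations as functions fixing everything outside V).\<close>
definition perm_group_on :: "'a set \<Rightarrow> ('a \<Rightarrow> 'a) set \<Rightarrow> bool" where
  "perm_group_on V G \<longleftrightarrow> id \<in> G \<and> (\<forall>g\<in>G. g permutes V) \<and>
     (\<forall>g\<in>G. \<forall>h\<in>G. g \<circ> h \<in> G) \<and> (\<forall>g\<in>G. inv g \<in> G)"

definition stabilises_code :: "('a \<Rightarrow> 'a) set \<Rightarrow> 'a set set \<Rightarrow> bool" where
  "stabilises_code G C \<longleftrightarrow> (\<forall>g\<in>G. (\<lambda>x. g ` x) ` C = C)"

definition transitive_on_sets :: "('a \<Rightarrow> 'a) set \<Rightarrow> 'a set set \<Rightarrow> bool" where
  "transitive_on_sets G X \<longleftrightarrow> (\<forall>x\<in>X. \<forall>y\<in>X. \<exists>g\<in>G. g ` x = y)"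

definition neighbour_transitive :: "'a set \<Rightarrow> nat \<Rightarrow> ('a \<Rightarrow> 'a) set \<Rightarrow> 'a set set \<Rightarrow> bool" where
  "neighbour_transitive V k G C \<longleftrightarrow>
     transitive_on_sets G C \<and> transitive_on_sets G (neighbours V k C)"

definition transitive_on :: "'a set \<Rightarrow> ('a \<Rightarrow> 'a) set \<Rightarrow> bool" where
  "transitive_on V G \<longleftrightarrow> (\<forall>x\<in>V. \<forall>y\<in>V. \<exists>g\<in>G. g x = y)"

definition imprimitive_on :: "'a set \<Rightarrow> ('a \<Rightarrow> 'a) set \<Rightarrow> bool" where
  "imprimitive_on V G \<longleftrightarrow> (\<exists>P. partition_on V P \<and> P \<noteq> {V} \<and> P \<noteq> (\<lambda>x. {x}) ` V \<and>
     (\<forall>g\<in>G. \<forall>U\<in>P. g ` U \<in> P))"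

definition uniform_partition :: "'a set \<Rightarrow> 'a set set \<Rightarrow> nat \<Rightarrow> nat \<Rightarrow> bool" where
  "uniform_partition V P a b \<longleftrightarrow> partition_on V P \<and> finite P \<and> card P = b \<and> (\<forall>U\<in>P. card U = a)"

definition utype :: "'a set set \<Rightarrow> 'a set \<Rightarrow> nat multiset" where
  "utype P x = filter_mset (\<lambda>i. i \<noteq> 0) (image_mset (\<lambda>U. card (x \<inter> U)) (mset_set P))"

definition nz :: "nat multiset \<Rightarrow> nat multiset" where
  "nz t = filter_mset (\<lambda>i. i \<noteq> 0) t"

definition type_code :: "'a set \<Rightarrow> nat \<Rightarrow> 'a set set \<Rightarrow> nat multiset \<Rightarrow> 'a set set" where
  "type_code V k P t = {x \<in> ksubsets V k. utype P x = nz t}"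

end

theory Submission
  imports Defs
begin


lemma classify:
  fixes P :: "'b set" and s :: "'b \<Rightarrow> nat" and a :: nat
  defines "R \<equiv> \<lambda>U1 U2. U1\<in>P \<and> U2\<in>P \<and> U1\<noteq>U2 \<and> 0 < s U1 \<and> s U2 < a \<and> s U1 \<noteq> s U2 + 1"
  assumes finP: "finite P" and b2: "2 \<le> card P" and a2: "2 \<le> a"
  and le: "\<forall>U\<in>P. s U \<le> a"
  and part: "\<exists>U\<in>P. 0 < s U \<and> s U < a"
  and uniq: "\<And>U1 U2 U3 U4. R U1 U2 \<Longrightarrow> R U3 U4 \<Longrightarrow> s U1 = s U3 \<and> s U2 = s U4"
  shows "(\<exists>U0\<in>P. 0 < s U0 \<and> (\<forall>U\<in>P. U \<noteq> U0 \<longrightarrow> s U = 0))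
       \<or> (\<exists>U0\<in>P. s U0 < a \<and> (\<forall>U\<in>P. U \<noteq> U0 \<longrightarrow> s U = a))
       \<or> (\<forall>U\<in>P. s U \<le> 1)
       \<or> (\<forall>U\<in>P. a - 1 \<le> s U)
       \<or> (\<exists>c. \<forall>U\<in>P. s U = c)
       \<or> (card P = 2 \<and> (\<exists>w. 0 < w \<and> w + 1 < a \<and> (\<forall>U\<in>P. s U = w \<or> s U = w + 1)
              \<and> (\<exists>U\<in>P. s U = w) \<and> (\<exists>U\<in>P. s U = w + 1)))
       \<or> (a = 2 \<and> (\<exists>U0\<in>P. s U0 = 1 \<and> (\<forall>U\<in>P. U \<noteq> U0 \<longrightarrow> s U \<noteq> 1)))"
proof (cases "\<exists>i\<in>P. \<exists>j\<in>P. i \<noteq> j \<and> 0 < s i \<and> s i < a \<and> 0 < s j \<and> s j < a \<and> s i = s j")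
  case True
  then obtain i j where ij: "i\<in>P" "j\<in>P" "i \<noteq> j" "0 < s i" "s i < a" "s j = s i" by auto
  define p where "p = s i"
  have Rij: "R i j" using ij by (simp add: R_def; fastforce)
  have Rp: "s U3 = p \<and> s U4 = p" if "R U3 U4" for U3 U4
    using uniq[OF Rij that] ij p_def by auto
  have z: "p = 1" if "U\<in>P" "s U = 0" for U
  proof (rule ccontr)
    assume "p \<noteq> 1"
    hence "R i U" using that ij a2 by (simp add: R_def p_def; fastforce)
    thus False using Rp[of i U] that ij p_def by auto
  qed
  have f: "p = a - 1" if "U\<in>P" "s U = a" for U
  proof (rule ccontr)
    assume "p \<noteq> a - 1"
    hence "R U i" using that ij a2 by (simp add: R_def p_def; fastforce)
    thus False using Rp[of U i] that ij p_def by auto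
  qed
  have o: "s U = p" if "U\<in>P" "0 < s U" "s U < a" for U
  proof (rule ccontr)
    assume ne: "s U \<noteq> p"
    hence "U \<noteq> i" using p_def by auto
    show False
    proof (cases "p = s U + 1")
      case True
      hence "R U i" using that ij \<open>U \<noteq> i\<close> by (simp add: R_def p_def; fastforce)
      thus False using Rp[of U i] ne by auto
    next
      case False
      hence "R i U" using that ij \<open>U \<noteq> i\<close> by (simp add: R_def p_def; fastforce)
      thus False using Rp[of i U] ne by auto
    qed
  qed
  have zf: False if "U\<in>P" "s U = a" "W\<in>P" "s W = 0" for U W
  proof -
    have "R U W" using that a2 by (simp add: R_def; fastforce)
    thus False using Rp[of U W] that ij p_def by auto
  qed
  have all: "s U = 0 \<or> s U = p \<or> s U = a" if "U\<in>P" for U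
    using o[OF that] le that by fastforce
  show ?thesis
  proof (cases "\<exists>W\<in>P. s W = 0")
    case True
    then obtain W where "W\<in>P" "s W = 0" by auto
    hence "p = 1" using z by auto
    have "\<forall>U\<in>P. s U \<le> 1"
      using all zf \<open>W\<in>P\<close> \<open>s W = 0\<close> \<open>p = 1\<close> by fastforce
    thus ?thesis by simp
  next
    case False
    show ?thesis
    proof (cases "\<exists>W\<in>P. s W = a")
      case True
      then obtain W where "W\<in>P" "s W = a" by auto
      hence "p = a - 1" using f by auto
      have "\<forall>U\<in>P. a - 1 \<le> s U"
        using all False \<open>p = a - 1\<close> by fastforce
      thus ?thesis by simp
    next
      case False2: False
      have "\<forall>U\<in>P. s U = p" using all False False2 by fastforce
      thus ?thesis by blast
    qed
  qed
next
  case False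
  have F1: "s i \<noteq> s j" if "i\<in>P" "j\<in>P" "i \<noteq> j" "0 < s i" "s i < a" "0 < s j" "s j < a" for i j
    using False that by blast
  obtain i0 where i0: "i0\<in>P" "0 < s i0" "s i0 < a" using part by auto
  show ?thesis
  proof (cases "\<exists>j\<in>P. j \<noteq> i0 \<and> 0 < s j \<and> s j < a")
    case True
    then obtain j where j: "j\<in>P" "j \<noteq> i0" "0 < s j" "s j < a" by auto
    have "s j \<noteq> s i0" using F1[of j i0] j i0 by simp
    then obtain l h where lh: "l\<in>P" "h\<in>P" "l\<noteq>h" "0 < s l" "s l < a" "0 < s h" "s h < a" "s l < s h"
    proof (cases "s j < s i0")
      case True
      then show ?thesis using that[of j i0] i0 j by auto
    next
      case False
      then show ?thesis using that[of i0 j] i0 j \<open>s j \<noteq> s i0\<close> by auto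
    qed
    have Rlh: "R l h" using lh by (simp add: R_def; fastforce)
    have hl: "s h = s l + 1"
    proof (rule ccontr)
      assume "s h \<noteq> s l + 1"
      hence Rx: "R h l" using lh by (simp add: R_def; fastforce)
      thus False using uniq[OF Rlh Rx] lh by simp
    qed
    have third: False if "U\<in>P" "U\<noteq>l" "U\<noteq>h" for U
    proof (cases "s U = 0")
      case True
      have Rx: "R h U" using lh hl True that a2 by (simp add: R_def; fastforce)
      thus False using uniq[OF Rlh Rx] lh by simp
    next
      case False
      show False
      proof (cases "s U = s l + 1")
        case True
        hence "s U = s h" "s U < a" using hl lh by auto
        thus False using F1[of U h] that lh False by simp
      next
        case False2: False
        have Rx: "R U l" using lh False False2 that by (simp add: R_def; fastforce)
        thus False using uniq[OF Rlh Rx] lh by simp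
      qed
    qed
    have "P \<subseteq> {l,h}" using third by auto
    hence "P = {l,h}" using lh by auto
    hence "card P = 2" using lh by auto
    moreover have "\<forall>U\<in>P. s U = s l \<or> s U = s l + 1" using \<open>P = {l,h}\<close> hl by auto
    moreover have "\<exists>U\<in>P. s U = s l" "\<exists>U\<in>P. s U = s l + 1" using lh hl by auto
    ultimately have "card P = 2 \<and> (\<exists>w. 0 < w \<and> w + 1 < a \<and> (\<forall>U\<in>P. s U = w \<or> s U = w + 1)
              \<and> (\<exists>U\<in>P. s U = w) \<and> (\<exists>U\<in>P. s U = w + 1))" using lh hl by (intro conjI exI[of _ "s l"]) auto
    thus ?thesis by blast
  next
    case False
    hence oth: "s U = 0 \<or> s U = a" if "U\<in>P" "U \<noteq> i0" for U
      using le that by (metis le_neq_implies_less not_gr0)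
    show ?thesis
    proof (cases "\<forall>U\<in>P. U \<noteq> i0 \<longrightarrow> s U = 0")
      case True thus ?thesis using i0 by blast
    next
      case Fz: False
      show ?thesis
      proof (cases "\<forall>U\<in>P. U \<noteq> i0 \<longrightarrow> s U = a")
        case True thus ?thesis using i0 by blast
      next
        case Fa: False
        obtain z where z: "z\<in>P" "z\<noteq>i0" "s z \<noteq> a" using Fa by auto
        hence z: "z\<in>P" "z\<noteq>i0" "s z = 0" using oth[of z] by auto
        obtain f where f: "f\<in>P" "f\<noteq>i0" "s f \<noteq> 0" using Fz by auto
        hence f: "f\<in>P" "f\<noteq>i0" "s f = a" using oth[of f] by auto
        have Rfz: "R f z" using z f a2 by (simp add: R_def; fastforce)
        have p1: "s i0 = 1"
        proof (rule ccontr)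
          assume "s i0 \<noteq> 1"
          hence Rx: "R i0 z" using z i0 by (simp add: R_def; fastforce)
          thus False using uniq[OF Rfz Rx] f i0 by simp
        qed
        have "a = 2"
        proof (rule ccontr)
          assume "a \<noteq> 2"
          hence Rx: "R f i0" using f i0 p1 a2 by (simp add: R_def; fastforce)
          thus False using uniq[OF Rfz Rx] z p1 by simp
        qed
        hence "a = 2 \<and> (\<exists>U0\<in>P. s U0 = 1 \<and> (\<forall>U\<in>P. U \<noteq> U0 \<longrightarrow> s U \<noteq> 1))"
          using p1 i0 by (intro conjI bexI[of _ i0]) (auto dest!: oth)
        thus ?thesis by blast
      qed
    qed
  qed
qed


lemma delta_uniq:
  fixes u w u' w' :: nat
  assumes h: "\<And>v. (if u = v then 1 else 0) + (if w = v then 1 else 0) + (if u' - 1 = v then 1 else 0) + (if w' + 1 = v then 1 else (0::nat))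
     = (if u' = v then 1 else 0) + (if w' = v then 1 else 0) + (if u - 1 = v then 1 else 0) + (if w + 1 = v then 1 else 0)"
  and u1: "1 \<le> u" and u1': "1 \<le> u'" and uw: "u \<noteq> w + 1" and uw': "u' \<noteq> w' + 1"
  shows "u = u' \<and> w = w'"
proof -
  have A: "u = u' \<or> u = w'"
  proof (rule ccontr)
    assume "\<not> (u = u' \<or> u = w')"
    hence "u \<noteq> u'" "u \<noteq> w'" by auto
    moreover have "u - 1 \<noteq> u" using u1 by simp
    moreover have "w + 1 \<noteq> u" using uw by simp
    ultimately show False using h[of u] by simp
  qed
  have B: "u' = u \<or> u' = w"
  proof (rule ccontr)
    assume "\<not> (u' = u \<or> u' = w)"
    hence "u' \<noteq> u" "u' \<noteq> w" by auto
    moreover have "u' - 1 \<noteq> u'" using u1' by simp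
    moreover have "w' + 1 \<noteq> u'" using uw' by simp
    ultimately show False using h[of u'] by simp
  qed
  show ?thesis
  proof (cases "u = u'")
    case True
    have "w = w'"
    proof (rule ccontr)
      assume ne: "w \<noteq> w'"
      have "w + 1 \<noteq> w" by simp
      show False using h[of w] ne True by (simp split: if_splits)
    qed
    thus ?thesis using True by simp
  next
    case False
    hence "u = w'" "u' = w" using A B by auto
    have "u' - 1 \<noteq> u - 1" using False u1 u1' by simp
    moreover have "u + 1 \<noteq> u - 1" by simp
    moreover have "u \<noteq> u - 1" using u1 by simp
    ultimately show ?thesis using h[of "u-1"] \<open>u = w'\<close> \<open>u' = w\<close> by (simp split: if_splits)
  qed
qed

locale ntc =
  fixes V :: "'a set" and k :: nat and C :: "'a set set" and G :: "('a \<Rightarrow> 'a) set" and P :: "'a set set"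
  assumes finV: "finite V" and k2: "2 \<le> k" and kv: "k + 2 \<le> card V"
  and code: "is_code V k C" and pg: "perm_group_on V G" and stab: "stabilises_code G C"
  and ntr: "neighbour_transitive V k G C" and trV: "transitive_on V G"
  and part: "partition_on V P" and PV: "P \<noteq> {V}" and Psing: "P \<noteq> (\<lambda>x. {x}) ` V"
  and pres: "\<And>g U. g\<in>G \<Longrightarrow> U\<in>P \<Longrightarrow> g ` U \<in> P"
begin

lemma UP: "\<Union>P = V" using part partition_onD1 by blast
lemma disj: "U\<in>P \<Longrightarrow> W\<in>P \<Longrightarrow> U \<noteq> W \<Longrightarrow> U \<inter> W = {}"
  using partition_onD2[OF part] unfolding disjoint_def by blast
lemma nonempty: "U\<in>P \<Longrightarrow> U \<noteq> {}" using partition_onD3[OF part] by auto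
lemma finP: "finite P" using finite_elements[OF finV part] .
lemma subV: "U\<in>P \<Longrightarrow> U \<subseteq> V" using UP by auto
lemma finU: "U\<in>P \<Longrightarrow> finite U" using subV finV finite_subset by blast
lemma blk: "x\<in>V \<Longrightarrow> \<exists>U\<in>P. x\<in>U" using UP by auto
lemma blk_unique: "U\<in>P \<Longrightarrow> W\<in>P \<Longrightarrow> x\<in>U \<Longrightarrow> x\<in>W \<Longrightarrow> U = W" using disj by blast

lemma g_perm: "g\<in>G \<Longrightarrow> g permutes V" using pg unfolding perm_group_on_def by blast
lemma g_inv: "g\<in>G \<Longrightarrow> inv g \<in> G" using pg unfolding perm_group_on_def by blast
lemma g_bij: "g\<in>G \<Longrightarrow> bij g" using g_perm permutes_bij by blast
lemma g_inj: "g\<in>G \<Longrightarrow> inj g" using g_bij bij_is_inj by blast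
lemma g_V: "g\<in>G \<Longrightarrow> g ` V = V" using g_perm permutes_image by blast
lemma g_sub: "g\<in>G \<Longrightarrow> x \<subseteq> V \<Longrightarrow> g ` x \<subseteq> V" using g_V by blast
lemma g_card: "g\<in>G \<Longrightarrow> card (g ` x) = card x" using g_inj card_image inj_on_subset by (metis subset_UNIV)
lemma g_inter: "g\<in>G \<Longrightarrow> g ` x \<inter> g ` y = g ` (x \<inter> y)" using g_inj image_Int by metis
lemma g_inv_img: "g\<in>G \<Longrightarrow> g ` (inv g ` U) = U"
proof -
  assume g: "g\<in>G"
  have "\<And>x. g (inv g x) = x" using g_bij[OF g] by (simp add: bij_is_surj surj_f_inv_f)
  thus ?thesis by (simp add: image_comp comp_def)
qed

lemma g_block_bij: "g\<in>G \<Longrightarrow> bij_betw (\<lambda>U. g ` U) P P"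
proof -
  assume g: "g\<in>G"
  have "inj_on (\<lambda>U. g ` U) P" using g_inj[OF g] by (simp add: inj_on_def inj_image_eq_iff)
  moreover have "(\<lambda>U. g ` U) ` P = P"
  proof
    show "(\<lambda>U. g ` U) ` P \<subseteq> P" using pres g by auto
    show "P \<subseteq> (\<lambda>U. g ` U) ` P"
    proof
      fix U assume "U\<in>P"
      hence "inv g ` U \<in> P" using pres g_inv g by auto
      thus "U \<in> (\<lambda>U. g ` U) ` P" using g_inv_img[OF g, of U] by (metis image_eqI)
    qed
  qed
  ultimately show ?thesis by (simp add: bij_betw_def)
qed

lemma blocks_trans: "U\<in>P \<Longrightarrow> W\<in>P \<Longrightarrow> \<exists>g\<in>G. g ` U = W"
proof -
  assume U: "U\<in>P" and W: "W\<in>P"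
  obtain u where u: "u\<in>U" using nonempty[OF U] by auto
  obtain w where w: "w\<in>W" using nonempty[OF W] by auto
  have "u\<in>V" "w\<in>V" using u w U W subV by auto
  then obtain g where g: "g\<in>G" "g u = w" using trV unfolding transitive_on_def by blast
  have "g ` U \<in> P" using pres g U by auto
  moreover have "w \<in> g ` U" using g u by auto
  ultimately have "g ` U = W" using blk_unique W w by blast
  thus ?thesis using g by blast
qed

definition a :: nat where "a = card (SOME U. U \<in> P)"
definition b :: nat where "b = card P"

lemma Pne: "P \<noteq> {}"
proof
  assume "P = {}" hence "V = {}" using UP by auto
  thus False using kv by simp
qed

lemma card_block: "U\<in>P \<Longrightarrow> card U = a"
proof -
  assume U: "U\<in>P"
  have S: "(SOME U. U \<in> P) \<in> P" using Pne by (simp add: some_in_eq)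
  obtain g where "g\<in>G" "g ` U = (SOME U. U \<in> P)" using blocks_trans[OF U S] by blast
  thus ?thesis unfolding a_def using g_card by metis
qed

lemma card_sum: "x \<subseteq> V \<Longrightarrow> card x = (\<Sum>U\<in>P. card (x \<inter> U))"
proof -
  assume x: "x \<subseteq> V"
  have "x = (\<Union>U\<in>P. x \<inter> U)" using x UP by auto
  hence "card x = card (\<Union>U\<in>P. x \<inter> U)" by simp
  also have "\<dots> = (\<Sum>U\<in>P. card (x \<inter> U))"
    by (rule card_UN_disjoint) (use finP finU disj in auto)
  finally show ?thesis .
qed

lemma vab: "card V = a * b"
proof -
  have "card V = (\<Sum>U\<in>P. card (V \<inter> U))" using card_sum by simp
  also have "\<dots> = (\<Sum>U\<in>P. a)" using subV card_block by (intro sum.cong) (auto simp: Int_absorb1)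
  finally show ?thesis unfolding b_def by simp
qed

lemma a2: "2 \<le> a"
proof (rule ccontr)
  assume "\<not> 2 \<le> a"
  hence "a = 0 \<or> a = 1" by auto
  moreover have "a \<noteq> 0"
  proof
    assume "a = 0"
    then obtain U where "U\<in>P" "card U = 0" using Pne card_block by auto
    thus False using finU nonempty by auto
  qed
  ultimately have a1: "a = 1" by simp
  have "P = (\<lambda>x. {x}) ` V"
  proof
    show "P \<subseteq> (\<lambda>x. {x}) ` V"
    proof
      fix U assume U: "U\<in>P"
      then obtain u where "U = {u}" using card_block a1 card_1_singletonE by metis
      thus "U \<in> (\<lambda>x. {x}) ` V" using subV U by auto
    qed
    show "(\<lambda>x. {x}) ` V \<subseteq> P"
    proof
      fix X assume "X \<in> (\<lambda>x. {x}) ` V"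
      then obtain x where x: "x\<in>V" "X = {x}" by auto
      then obtain U where U: "U\<in>P" "x\<in>U" using blk by auto
      then obtain u where "U = {u}" using card_block a1 card_1_singletonE by metis
      thus "X \<in> P" using U x by auto
    qed
  qed
  thus False using Psing by simp
qed

lemma b2: "2 \<le> b"
proof (rule ccontr)
  assume "\<not> 2 \<le> b"
  moreover have "b \<noteq> 0" using Pne finP b_def by simp
  ultimately have "b = 1" by simp
  then obtain U where "P = {U}" using card_1_singletonE b_def by metis
  hence "P = {V}" using UP by auto
  thus False using PV by simp
qed

definition cnt :: "'a set \<Rightarrow> nat \<Rightarrow> nat" where "cnt x v = card {U\<in>P. card (x \<inter> U) = v}"

lemma cnt_sum: "cnt x v = (\<Sum>U\<in>P. if card (x \<inter> U) = v then 1 else 0)"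
  unfolding cnt_def using finP by (simp add: sum.inter_filter[symmetric])

lemma cnt_g: "g\<in>G \<Longrightarrow> cnt (g ` x) v = cnt x v"
proof -
  assume g: "g\<in>G"
  have bb: "bij_betw (\<lambda>U. g ` U) P P" using g_block_bij[OF g] .
  have eq: "{U\<in>P. card (g ` x \<inter> U) = v} = (\<lambda>W. g ` W) ` {W\<in>P. card (x \<inter> W) = v}"
  proof
    show "(\<lambda>W. g ` W) ` {W\<in>P. card (x \<inter> W) = v} \<subseteq> {U\<in>P. card (g ` x \<inter> U) = v}"
      using pres g g_inter g_card by auto
    show "{U\<in>P. card (g ` x \<inter> U) = v} \<subseteq> (\<lambda>W. g ` W) ` {W\<in>P. card (x \<inter> W) = v}"
    proof
      fix U assume U: "U \<in> {U\<in>P. card (g ` x \<inter> U) = v}"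
      define W where "W = inv g ` U"
      have W: "W\<in>P" using U pres g_inv g W_def by auto
      have gW: "g ` W = U" using g_inv_img[OF g] W_def by simp
      have "card (x \<inter> W) = v" using U gW g_inter[OF g, of x W] g_card[OF g, of "x \<inter> W"] by auto
      thus "U \<in> (\<lambda>W. g ` W) ` {W\<in>P. card (x \<inter> W) = v}" using W gW by auto
    qed
  qed
  have "inj_on (\<lambda>W. g ` W) {W\<in>P. card (x \<inter> W) = v}"
    using bb unfolding bij_betw_def by (auto intro: inj_on_subset)
  thus ?thesis unfolding cnt_def eq by (simp add: card_image)
qed

lemma C_sub: "x\<in>C \<Longrightarrow> x \<subseteq> V \<and> card x = k"
proof -
  assume "x\<in>C"
  hence "x \<in> ksubsets V k" using code unfolding is_code_def by blast
  thus ?thesis unfolding ksubsets_def by simp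
qed
lemma C_g: "g\<in>G \<Longrightarrow> x\<in>C \<Longrightarrow> g ` x \<in> C"
proof -
  assume "g\<in>G" "x\<in>C"
  hence "(\<lambda>x. g ` x) ` C = C" using stab unfolding stabilises_code_def by simp
  thus ?thesis using \<open>x\<in>C\<close> by (metis image_eqI)
qed
lemma C_cnt: "x\<in>C \<Longrightarrow> y\<in>C \<Longrightarrow> cnt x = cnt y"
proof -
  assume "x\<in>C" "y\<in>C"
  have T: "transitive_on_sets G C" using ntr unfolding neighbour_transitive_def by simp
  obtain g where "g\<in>G" "g ` x = y" using T \<open>x\<in>C\<close> \<open>y\<in>C\<close> unfolding transitive_on_sets_def by meson
  thus ?thesis using cnt_g by auto
qed
lemma N_cnt: "x\<in>neighbours V k C \<Longrightarrow> y\<in>neighbours V k C \<Longrightarrow> cnt x = cnt y"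
proof -
  assume "x\<in>neighbours V k C" "y\<in>neighbours V k C"
  have T: "transitive_on_sets G (neighbours V k C)" using ntr unfolding neighbour_transitive_def by simp
  obtain g where "g\<in>G" "g ` x = y" using T \<open>x\<in>neighbours V k C\<close> \<open>y\<in>neighbours V k C\<close> unfolding transitive_on_sets_def by meson
  thus ?thesis using cnt_g by auto
qed

lemma mv_basic:
  assumes x: "x \<subseteq> V" "card x = k" and p: "p\<in>x" and q: "q\<in>V" "q\<notin>x"
  shows "insert q (x - {p}) \<in> ksubsets V k" "johnson_adj k x (insert q (x - {p}))"
proof -
  have fx: "finite x" using x finV finite_subset by blast
  have "card (insert q (x - {p})) = k" using fx p q x k2 by (simp add: card_Diff_singleton)
  thus "insert q (x - {p}) \<in> ksubsets V k" using x p q unfolding ksubsets_def by auto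
  have "x \<inter> insert q (x - {p}) = x - {p}" using q by auto
  thus "johnson_adj k x (insert q (x - {p}))" unfolding johnson_adj_def using fx p x
    by (simp add: card_Diff_singleton)
qed

lemma mv_N:
  assumes "x\<in>C" and p: "p\<in>x" and q: "q\<in>V" "q\<notin>x" and "insert q (x - {p}) \<notin> C"
  shows "insert q (x - {p}) \<in> neighbours V k C"
  using mv_basic[of x p q] assms C_sub unfolding neighbours_def by blast

lemma mv_other:
  assumes "p\<in>Ui" "q\<in>Uj" "Ui\<in>P" "Uj\<in>P" "U\<in>P" "U\<noteq>Ui" "U\<noteq>Uj"
  shows "card (insert q (x - {p}) \<inter> U) = card (x \<inter> U)"
proof -
  have "p\<notin>U" "q\<notin>U" using assms blk_unique by blast+
  hence "insert q (x - {p}) \<inter> U = x \<inter> U" by auto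
  thus ?thesis by simp
qed

lemma mv_same:
  assumes "p\<in>x" "q\<notin>x" "p\<in>U" "q\<in>U" "U\<in>P"
  shows "card (insert q (x - {p}) \<inter> U) = card (x \<inter> U)"
proof -
  have f: "finite (x \<inter> U)" using finU assms by auto
  have "insert q (x - {p}) \<inter> U = insert q ((x \<inter> U) - {p})" using assms by auto
  hence "card (insert q (x - {p}) \<inter> U) = card ((x \<inter> U) - {p}) + 1" using f assms by simp
  also have "\<dots> = card (x \<inter> U)"
  proof -
    have "p \<in> x \<inter> U" using assms by auto
    hence "card (x \<inter> U) \<ge> 1" using f card_gt_0_iff by (metis One_nat_def Suc_leI empty_iff)
    thus ?thesis using f \<open>p \<in> x \<inter> U\<close> by (simp add: card_Diff_singleton)
  qed
  finally show ?thesis .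
qed

lemma mv_src:
  assumes "p\<in>x" "q\<notin>x" "p\<in>Ui" "q\<in>Uj" "Ui\<in>P" "Uj\<in>P" "Ui\<noteq>Uj"
  shows "card (insert q (x - {p}) \<inter> Ui) = card (x \<inter> Ui) - 1"
proof -
  have "q\<notin>Ui" using assms blk_unique by blast
  hence "insert q (x - {p}) \<inter> Ui = (x \<inter> Ui) - {p}" by auto
  thus ?thesis using assms finU by (simp add: card_Diff_singleton)
qed

lemma mv_tgt:
  assumes "p\<in>x" "q\<notin>x" "p\<in>Ui" "q\<in>Uj" "Ui\<in>P" "Uj\<in>P" "Ui\<noteq>Uj"
  shows "card (insert q (x - {p}) \<inter> Uj) = card (x \<inter> Uj) + 1"
proof -
  have "p\<notin>Uj" using assms blk_unique by blast
  hence "insert q (x - {p}) \<inter> Uj = insert q (x \<inter> Uj)" using assms by auto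
  thus ?thesis using assms finU by simp
qed

lemma cnt_same_block:
  assumes "p\<in>x" "q\<notin>x" "p\<in>U" "q\<in>U" "U\<in>P"
  shows "cnt (insert q (x - {p})) = cnt x"
proof
  fix v
  have "\<forall>W\<in>P. card (insert q (x - {p}) \<inter> W) = card (x \<inter> W)"
  proof
    fix W assume W: "W\<in>P"
    show "card (insert q (x - {p}) \<inter> W) = card (x \<inter> W)"
    proof (cases "W = U")
      case True thus ?thesis using mv_same assms by simp
    next
      case False thus ?thesis using mv_other[of p U q U W x] assms W by simp
    qed
  qed
  hence "{U\<in>P. card (insert q (x - {p}) \<inter> U) = v} = {U\<in>P. card (x \<inter> U) = v}" by auto
  thus "cnt (insert q (x - {p})) v = cnt x v" unfolding cnt_def by simp
qed

lemma sum_split2: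
  assumes "Ui\<in>P" "Uj\<in>P" "Ui\<noteq>Uj"
  shows "(\<Sum>U\<in>P. f U) = f Ui + f Uj + (\<Sum>U\<in>P-{Ui}-{Uj}. f U)"
proof -
  have "(\<Sum>U\<in>P. f U) = f Ui + (\<Sum>U\<in>P-{Ui}. f U)" using assms finP sum.remove by metis
  also have "(\<Sum>U\<in>P-{Ui}. f U) = f Uj + (\<Sum>U\<in>P-{Ui}-{Uj}. f U)" using assms finP sum.remove
    by (metis finite_Diff insert_Diff insert_iff)
  finally show ?thesis by (simp add: add.assoc)
qed

lemma cnt_cross:
  assumes "p\<in>x" "q\<notin>x" "p\<in>Ui" "q\<in>Uj" "Ui\<in>P" "Uj\<in>P" "Ui\<noteq>Uj"
  shows "cnt (insert q (x - {p})) v + (if card (x \<inter> Ui) = v then 1 else 0) + (if card (x \<inter> Uj) = v then 1 else 0)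
       = cnt x v + (if card (x \<inter> Ui) - 1 = v then 1 else 0) + (if card (x \<inter> Uj) + 1 = v then 1 else 0)"
proof -
  let ?y = "insert q (x - {p})"
  have rest: "(\<Sum>U\<in>P-{Ui}-{Uj}. if card (?y \<inter> U) = v then 1 else 0::nat) = (\<Sum>U\<in>P-{Ui}-{Uj}. if card (x \<inter> U) = v then 1 else 0)"
    using mv_other[of p Ui q Uj] assms by (intro sum.cong) auto
  show ?thesis
    unfolding cnt_sum sum_split2[OF assms(5-7)] rest
    using mv_src[OF assms] mv_tgt[OF assms] by simp
qed

lemma s_le: "U\<in>P \<Longrightarrow> card (x \<inter> U) \<le> a"
  using card_block finU card_mono by (metis inf_le2)

lemma cnt_pos: "cnt x v \<noteq> 0 \<longleftrightarrow> (\<exists>U\<in>P. card (x \<inter> U) = v)"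
  unfolding cnt_def using finP by auto

lemma get_p: "U\<in>P \<Longrightarrow> 0 < card (x \<inter> U) \<Longrightarrow> \<exists>p. p\<in>x \<and> p\<in>U"
  by (metis card.empty disjoint_iff less_irrefl)

lemma get_q: "U\<in>P \<Longrightarrow> card (x \<inter> U) < a \<Longrightarrow> \<exists>q. q\<in>U \<and> q\<notin>x"
proof (rule ccontr)
  assume U: "U\<in>P" "card (x \<inter> U) < a" and "\<not> (\<exists>q. q\<in>U \<and> q\<notin>x)"
  hence "x \<inter> U = U" by auto
  thus False using U card_block by simp
qed

lemma E:
  assumes x: "x \<subseteq> V" "card x = k" and part: "\<exists>U\<in>P. 0 < card (x \<inter> U) \<and> card (x \<inter> U) < a"
  shows "\<exists>Ui\<in>P. \<exists>Uj\<in>P. Ui \<noteq> Uj \<and> 0 < card (x \<inter> Ui) \<and> card (x \<inter> Uj) < a \<and> card (x \<inter> Ui) \<noteq> card (x \<inter> Uj) + 1"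
proof (rule ccontr)
  assume nt: "\<not> ?thesis"
  have H: "card (x \<inter> Ui) = card (x \<inter> Uj) + 1"
    if "Ui\<in>P" "Uj\<in>P" "Ui \<noteq> Uj" "0 < card (x \<inter> Ui)" "card (x \<inter> Uj) < a" for Ui Uj
  proof (rule ccontr)
    assume "card (x \<inter> Ui) \<noteq> card (x \<inter> Uj) + 1"
    hence "\<exists>Ui\<in>P. \<exists>Uj\<in>P. Ui \<noteq> Uj \<and> 0 < card (x \<inter> Ui) \<and> card (x \<inter> Uj) < a \<and> card (x \<inter> Ui) \<noteq> card (x \<inter> Uj) + 1"
      using that by (intro bexI[of _ Ui] bexI[of _ Uj]) auto
    thus False using nt by simp
  qed
  obtain i0 where i0: "i0\<in>P" "0 < card (x \<inter> i0)" "card (x \<inter> i0) < a" using part by blast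
  have oth: "card (x \<inter> j) = 0 \<or> card (x \<inter> j) = a" if "j\<in>P" "j\<noteq>i0" for j
  proof (rule ccontr)
    assume "\<not> ?thesis"
    hence "0 < card (x \<inter> j)" "card (x \<inter> j) < a" using s_le[OF that(1), of x] by auto
    thus False using H[of i0 j] H[of j i0] i0 that by auto
  qed
  have "P - {i0} \<noteq> {}"
  proof
    assume "P - {i0} = {}"
    hence "P \<subseteq> {i0}" by auto
    hence "card P \<le> card {i0}" using card_mono[of "{i0}" P] by simp
    hence "card P \<le> 1" by simp
    thus False using b2 b_def by simp
  qed
  then obtain j where j: "j\<in>P" "j\<noteq>i0" by auto
  have ksum: "k = card (x \<inter> i0) + (\<Sum>U\<in>P-{i0}. card (x \<inter> U))"
    using card_sum[OF x(1)] x(2) sum.remove[OF finP i0(1), of "\<lambda>U. card (x \<inter> U)"] by simp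
  have cP: "card (P - {i0}) = b - 1" using i0 finP b_def by simp
  show False
  proof (cases "\<forall>U\<in>P-{i0}. card (x \<inter> U) = 0")
    case True
    hence "card (x \<inter> j) = 0" using j by auto
    hence "card (x \<inter> i0) = 1" using H[of i0 j] i0 j a2 by auto
    moreover have "(\<Sum>U\<in>P-{i0}. card (x \<inter> U)) = 0" using True by simp
    ultimately show False using ksum k2 by simp
  next
    case False
    then obtain j1 where j1: "j1\<in>P" "j1\<noteq>i0" "card (x \<inter> j1) \<noteq> 0" by auto
    hence j1: "j1\<in>P" "j1\<noteq>i0" "card (x \<inter> j1) = a" using oth[of j1] by auto
    have allA: "\<forall>U\<in>P-{i0}. card (x \<inter> U) = a"
    proof
      fix U assume U: "U\<in>P-{i0}"
      show "card (x \<inter> U) = a"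
      proof (rule ccontr)
        assume "card (x \<inter> U) \<noteq> a"
        hence "card (x \<inter> U) = 0" using oth[of U] U by auto
        moreover have "U \<noteq> j1" using \<open>card (x \<inter> U) \<noteq> a\<close> j1 by auto
        ultimately show False using H[of j1 U] j1 U a2 by auto
      qed
    qed
    have "a = card (x \<inter> i0) + 1" using H[of j1 i0] j1 i0 a2 by auto
    moreover have "(\<Sum>U\<in>P-{i0}. card (x \<inter> U)) = (b - 1) * a" using allA cP by simp
    ultimately have "k = a - 1 + (b - 1) * a" using ksum by simp
    moreover have "(b - 1) * a + a = a * b" using b2 by (cases b) (auto simp: algebra_simps)
    ultimately have "k + 1 = a * b" using a2 by linarith
    thus False using kv vab by simp
  qed
qed

definition partial :: "'a set \<Rightarrow> bool" where
  "partial x \<longleftrightarrow> (\<exists>U\<in>P. 0 < card (x \<inter> U) \<and> card (x \<inter> U) < a)"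

lemma partial_cnt: "cnt x = cnt y \<Longrightarrow> partial x \<Longrightarrow> partial y"
proof -
  assume e: "cnt x = cnt y" and "partial x"
  then obtain U where U: "U\<in>P" "0 < card (x \<inter> U)" "card (x \<inter> U) < a" unfolding partial_def by blast
  hence "cnt x (card (x \<inter> U)) \<noteq> 0" using cnt_pos by blast
  hence "cnt y (card (x \<inter> U)) \<noteq> 0" using e by simp
  then obtain W where "W\<in>P" "card (y \<inter> W) = card (x \<inter> U)" using cnt_pos by blast
  thus "partial y" using U unfolding partial_def by (intro bexI[of _ W]) auto
qed

lemma cross_changes:
  assumes "p\<in>x" "q\<notin>x" "p\<in>Ui" "q\<in>Uj" "Ui\<in>P" "Uj\<in>P" "Ui\<noteq>Uj" "card (x \<inter> Ui) \<noteq> card (x \<inter> Uj) + 1"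
  shows "cnt (insert q (x - {p})) \<noteq> cnt x"
proof
  assume e: "cnt (insert q (x - {p})) = cnt x"
  have pos: "0 < card (x \<inter> Ui)" using assms finU card_gt_0_iff by blast
  have "card (x \<inter> Ui) - 1 \<noteq> card (x \<inter> Ui)" using pos by simp
  thus False using cnt_cross[OF assms(1-7), of "card (x \<inter> Ui)"] e assms(8) by simp
qed

lemma cross_keeps:
  assumes "p\<in>x" "q\<notin>x" "p\<in>Ui" "q\<in>Uj" "Ui\<in>P" "Uj\<in>P" "Ui\<noteq>Uj" "card (x \<inter> Ui) = card (x \<inter> Uj) + 1"
  shows "cnt (insert q (x - {p})) = cnt x"
proof
  fix v show "cnt (insert q (x - {p})) v = cnt x v"
    using cnt_cross[OF assms(1-7), of v] assms(8) by (simp split: if_splits)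
qed

lemma K:
  assumes x: "x\<in>C" "partial x" and y: "y \<in> ksubsets V k" "johnson_adj k x y" "cnt y = cnt x"
  shows "y \<in> C"
proof (rule ccontr)
  assume yC: "y \<notin> C"
  hence yN: "y \<in> neighbours V k C" using x y unfolding neighbours_def by blast
  have xs: "x \<subseteq> V" "card x = k" using C_sub x by auto
  obtain Ui Uj where U: "Ui\<in>P" "Uj\<in>P" "Ui \<noteq> Uj" "0 < card (x \<inter> Ui)" "card (x \<inter> Uj) < a"
      "card (x \<inter> Ui) \<noteq> card (x \<inter> Uj) + 1"
    using E[OF xs] x unfolding partial_def by blast
  obtain p where p: "p\<in>x" "p\<in>Ui" using get_p U by blast
  obtain q where q: "q\<in>Uj" "q\<notin>x" using get_q U by blast
  have qV: "q\<in>V" using q U subV by auto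
  let ?z = "insert q (x - {p})"
  have ne: "cnt ?z \<noteq> cnt x" using cross_changes[of p x q Ui Uj] p q U by blast
  hence "?z \<notin> C" using C_cnt x by metis
  hence "?z \<in> neighbours V k C" using mv_N[OF x(1) p(1) qV q(2)] by blast
  hence "cnt ?z = cnt y" using N_cnt yN by blast
  thus False using ne y by simp
qed

lemma Kmv:
  assumes x: "x\<in>C" "partial x" and pq: "p\<in>x" "q\<in>V" "q\<notin>x" and e: "cnt (insert q (x - {p})) = cnt x"
  shows "insert q (x - {p}) \<in> C"
  using K[OF x mv_basic[of x p q] e] C_sub[OF x(1)] pq by blast

lemma uniqU:
  assumes x: "x\<in>C" "partial x"
  and U: "Ui\<in>P" "Uj\<in>P" "Ui \<noteq> Uj" "0 < card (x \<inter> Ui)" "card (x \<inter> Uj) < a" "card (x \<inter> Ui) \<noteq> card (x \<inter> Uj) + 1"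
  and U': "Ui'\<in>P" "Uj'\<in>P" "Ui' \<noteq> Uj'" "0 < card (x \<inter> Ui')" "card (x \<inter> Uj') < a" "card (x \<inter> Ui') \<noteq> card (x \<inter> Uj') + 1"
  shows "card (x \<inter> Ui) = card (x \<inter> Ui') \<and> card (x \<inter> Uj) = card (x \<inter> Uj')"
proof -
  obtain p where p: "p\<in>x" "p\<in>Ui" using get_p U by blast
  obtain q where q: "q\<in>Uj" "q\<notin>x" using get_q U by blast
  obtain p' where p': "p'\<in>x" "p'\<in>Ui'" using get_p U' by blast
  obtain q' where q': "q'\<in>Uj'" "q'\<notin>x" using get_q U' by blast
  have qV: "q\<in>V" "q'\<in>V" using q q' U U' subV by auto
  let ?z = "insert q (x - {p})" and ?z' = "insert q' (x - {p'})"
  have "cnt ?z \<noteq> cnt x" using cross_changes[of p x q Ui Uj] p q U by blast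
  hence "?z \<notin> C" using C_cnt x by metis
  hence N1: "?z \<in> neighbours V k C" using mv_N[OF x(1) p(1) qV(1) q(2)] by blast
  have "cnt ?z' \<noteq> cnt x" using cross_changes[of p' x q' Ui' Uj'] p' q' U' by blast
  hence "?z' \<notin> C" using C_cnt x by metis
  hence N2: "?z' \<in> neighbours V k C" using mv_N[OF x(1) p'(1) qV(2) q'(2)] by blast
  have ee: "cnt ?z = cnt ?z'" using N_cnt N1 N2 by blast
  show ?thesis
  proof (rule delta_uniq)
    fix v
    show "(if card (x \<inter> Ui) = v then 1 else 0) + (if card (x \<inter> Uj) = v then 1 else 0) + (if card (x \<inter> Ui') - 1 = v then 1 else 0) + (if card (x \<inter> Uj') + 1 = v then 1 else (0::nat))
     = (if card (x \<inter> Ui') = v then 1 else 0) + (if card (x \<inter> Uj') = v then 1 else 0) + (if card (x \<inter> Ui) - 1 = v then 1 else 0) + (if card (x \<inter> Uj) + 1 = v then 1 else 0)"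
      using cnt_cross[of p x q Ui Uj v] cnt_cross[of p' x q' Ui' Uj' v] p q p' q' U U' fun_cong[OF ee, of v]
      by linarith
  qed (use U U' in auto)
qed

lemma C_partial: "x\<in>C \<Longrightarrow> y\<in>C \<Longrightarrow> partial x \<Longrightarrow> partial y"
  using C_cnt partial_cnt by metis

lemma mv_dist:
  assumes "finite x" "p\<in>x" "p\<notin>y" "q\<in>y" "q\<notin>x"
  shows "card (insert q (x - {p}) - y) < card (x - y)"
proof -
  have "insert q (x - {p}) - y = (x - y) - {p}" using assms by auto
  moreover have "p \<in> x - y" using assms by auto
  moreover have "finite (x - y)" using assms by simp
  ultimately show ?thesis using card_Diff1_less by metis
qed

lemma reach_gen:
  assumes y: "y \<subseteq> V" and step: "\<And>x. x\<in>C \<Longrightarrow> Q x \<Longrightarrow> x \<noteq> y \<Longrightarrow> \<exists>x'\<in>C. Q x' \<and> card (x' - y) < card (x - y)"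
  shows "x\<in>C \<Longrightarrow> Q x \<Longrightarrow> y\<in>C"
proof (induction "card (x - y)" arbitrary: x rule: less_induct)
  case less
  show ?case
  proof (cases "x = y")
    case True thus ?thesis using less by simp
  next
    case False
    then obtain x' where "x'\<in>C" "Q x'" "card (x' - y) < card (x - y)" using step less by blast
    thus ?thesis using less by blast
  qed
qed

definition mixed :: "'a set \<Rightarrow> 'a set \<Rightarrow> bool" where
  "mixed x y \<longleftrightarrow> (\<exists>U\<in>P. \<exists>p q. p\<in>x \<and> p\<notin>y \<and> p\<in>U \<and> q\<in>y \<and> q\<notin>x \<and> q\<in>U)"

lemma step_mixed:
  assumes x: "x\<in>C" "partial x" and y: "y \<subseteq> V" and m: "mixed x y"
  shows "\<exists>x'\<in>C. (\<forall>U\<in>P. card (x' \<inter> U) = card (x \<inter> U)) \<and> card (x' - y) < card (x - y)"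
proof -
  obtain U p q where U: "U\<in>P" "p\<in>x" "p\<notin>y" "p\<in>U" "q\<in>y" "q\<notin>x" "q\<in>U" using m unfolding mixed_def by blast
  have qV: "q\<in>V" using U y by auto
  have e: "cnt (insert q (x - {p})) = cnt x" using cnt_same_block[of p x q U] U by blast
  have "insert q (x - {p}) \<in> C" using Kmv[OF x U(2) qV U(6) e] .
  moreover have "\<forall>W\<in>P. card (insert q (x - {p}) \<inter> W) = card (x \<inter> W)"
  proof
    fix W assume W: "W\<in>P"
    show "card (insert q (x - {p}) \<inter> W) = card (x \<inter> W)"
    proof (cases "W = U")
      case True thus ?thesis using mv_same U by simp
    next
      case False thus ?thesis using mv_other[of p U q U W x] U W by simp
    qed
  qed
  moreover have "card (insert q (x - {p}) - y) < card (x - y)"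
    using mv_dist U C_sub[OF x(1)] finV finite_subset by metis
  ultimately show ?thesis by blast
qed

lemma step_pair:
  assumes x: "x\<in>C" "partial x" and y: "y \<subseteq> V"
  and U: "Ui\<in>P" "Uj\<in>P" "Ui\<noteq>Uj" "card (y \<inter> Ui) < card (x \<inter> Ui)" "card (x \<inter> Uj) < card (y \<inter> Uj)"
     "card (x \<inter> Ui) = card (x \<inter> Uj) + 1"
  shows "\<exists>x'\<in>C. card (x' - y) < card (x - y)"
proof -
  obtain p where p: "p\<in>x" "p\<in>Ui" "p\<notin>y"
  proof (rule ccontr)
    assume "\<not> thesis"
    hence "x \<inter> Ui \<subseteq> y \<inter> Ui" using that by blast
    hence "card (x \<inter> Ui) \<le> card (y \<inter> Ui)" using finU U card_mono by (metis inf_le2 rev_finite_subset)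
    thus False using U by simp
  qed
  obtain q where q: "q\<in>y" "q\<in>Uj" "q\<notin>x"
  proof (rule ccontr)
    assume "\<not> thesis"
    hence "y \<inter> Uj \<subseteq> x \<inter> Uj" using that by blast
    hence "card (y \<inter> Uj) \<le> card (x \<inter> Uj)" using finU U card_mono by (metis inf_le2 rev_finite_subset)
    thus False using U by simp
  qed
  have qV: "q\<in>V" using q y by auto
  have e: "cnt (insert q (x - {p})) = cnt x" using cross_keeps[of p x q Ui Uj] p q U by blast
  have "insert q (x - {p}) \<in> C" using Kmv[OF x p(1) qV q(3) e] .
  moreover have "card (insert q (x - {p}) - y) < card (x - y)"
    using mv_dist p q C_sub[OF x(1)] finV finite_subset by metis
  ultimately show ?thesis by blast
qed

lemma nomix_lt:
  assumes "\<not> mixed x y" "U\<in>P" "p\<in>x" "p\<notin>y" "p\<in>U"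
  shows "card (y \<inter> U) < card (x \<inter> U)"
proof -
  have "y \<inter> U \<subseteq> x \<inter> U" using assms unfolding mixed_def by blast
  moreover have "p \<in> x \<inter> U - y \<inter> U" using assms by auto
  ultimately have "y \<inter> U \<subset> x \<inter> U" by blast
  thus ?thesis using finU assms psubset_card_mono by (metis inf_le2 rev_finite_subset)
qed

lemma nomix_gt:
  assumes "\<not> mixed x y" "U\<in>P" "q\<in>y" "q\<notin>x" "q\<in>U"
  shows "card (x \<inter> U) < card (y \<inter> U)"
proof -
  have "x \<inter> U \<subseteq> y \<inter> U" using assms unfolding mixed_def by blast
  moreover have "q \<in> y \<inter> U - x \<inter> U" using assms by auto
  ultimately have "x \<inter> U \<subset> y \<inter> U" by blast
  thus ?thesis using finU assms psubset_card_mono by (metis inf_le2 rev_finite_subset)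
qed

lemma ex_diff:
  assumes "x \<subseteq> V" "y \<subseteq> V" "card x = card y" "x \<noteq> y"
  shows "\<exists>p. p\<in>x \<and> p\<notin>y" "\<exists>q. q\<in>y \<and> q\<notin>x"
proof -
  have fx: "finite x" "finite y" using assms finV finite_subset by auto
  show "\<exists>p. p\<in>x \<and> p\<notin>y"
  proof (rule ccontr)
    assume "\<not> ?thesis" hence "x \<subseteq> y" by blast
    thus False using card_subset_eq fx assms by metis
  qed
  show "\<exists>q. q\<in>y \<and> q\<notin>x"
  proof (rule ccontr)
    assume "\<not> ?thesis" hence "y \<subseteq> x" by blast
    thus False using card_subset_eq fx assms by metis
  qed
qed

lemma vals_cnt: "cnt x = cnt y \<Longrightarrow> (\<forall>U\<in>P. card (x \<inter> U) \<in> S) \<Longrightarrow> U\<in>P \<Longrightarrow> card (y \<inter> U) \<in> S"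
proof -
  assume e: "cnt x = cnt y" and S: "\<forall>U\<in>P. card (x \<inter> U) \<in> S" and U: "U\<in>P"
  have "cnt y (card (y \<inter> U)) \<noteq> 0" using cnt_pos U by blast
  hence "cnt x (card (y \<inter> U)) \<noteq> 0" using e by simp
  then obtain W where "W\<in>P" "card (x \<inter> W) = card (y \<inter> U)" using cnt_pos by blast
  thus ?thesis using S by metis
qed

lemma reach_two:
  assumes x0: "x0\<in>C" "partial x0" and w: "\<forall>U\<in>P. card (x0 \<inter> U) = w \<or> card (x0 \<inter> U) = w + 1"
  and y: "y \<in> ksubsets V k" "cnt y = cnt x0"
  shows "y\<in>C"
proof -
  have ys: "y \<subseteq> V" "card y = k" using y unfolding ksubsets_def by auto
  have yv: "card (y \<inter> U) \<in> {w, w+1}" if "U\<in>P" for U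
    using vals_cnt[of x0 y "{w,w+1}" U] y w that by auto
  show ?thesis
  proof (rule reach_gen[OF ys(1), of "\<lambda>_. True"])
    fix x assume x: "x\<in>C" "True" "x \<noteq> y"
    have px: "partial x" using C_partial x0 x by blast
    have xv: "card (x \<inter> U) \<in> {w, w+1}" if "U\<in>P" for U
      using vals_cnt[of x0 x "{w,w+1}" U] C_cnt[OF x0(1) x(1)] w that by auto
    show "\<exists>x'\<in>C. True \<and> card (x' - y) < card (x - y)"
    proof (cases "mixed x y")
      case True thus ?thesis using step_mixed[OF x(1) px ys(1)] by blast
    next
      case False
      have xs: "x \<subseteq> V" "card x = k" using C_sub x by auto
      obtain p where p: "p\<in>x" "p\<notin>y" using ex_diff[OF xs(1) ys(1)] xs ys x by auto
      obtain q where q: "q\<in>y" "q\<notin>x" using ex_diff[OF xs(1) ys(1)] xs ys x by auto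
      obtain Ui where Ui: "Ui\<in>P" "p\<in>Ui" using blk p xs by blast
      obtain Uj where Uj: "Uj\<in>P" "q\<in>Uj" using blk q ys by blast
      have l1: "card (y \<inter> Ui) < card (x \<inter> Ui)" using nomix_lt[OF False Ui(1) p Ui(2)] .
      have l2: "card (x \<inter> Uj) < card (y \<inter> Uj)" using nomix_gt[OF False Uj(1) q Uj(2)] .
      have "card (x \<inter> Ui) = w + 1" using l1 xv[OF Ui(1)] yv[OF Ui(1)] by auto
      moreover have "card (x \<inter> Uj) = w" using l2 xv[OF Uj(1)] yv[OF Uj(1)] by auto
      ultimately have "Ui \<noteq> Uj" "card (x \<inter> Ui) = card (x \<inter> Uj) + 1" by auto
      thus ?thesis using step_pair[OF x(1) px ys(1) Ui(1) Uj(1) _ l1 l2] by blast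
    qed
  qed (use x0 in auto)
qed

lemma reach_vec:
  assumes x: "x\<in>C" and y: "y \<in> ksubsets V k" and e: "\<forall>U\<in>P. card (x \<inter> U) = card (y \<inter> U)"
  shows "y\<in>C"
proof -
  have ys: "y \<subseteq> V" "card y = k" using y unfolding ksubsets_def by auto
  show ?thesis
  proof (cases "partial x")
    case True
    show ?thesis
    proof (rule reach_gen[OF ys(1), of "\<lambda>x. \<forall>U\<in>P. card (x \<inter> U) = card (y \<inter> U)"])
      fix x' assume x': "x'\<in>C" "\<forall>U\<in>P. card (x' \<inter> U) = card (y \<inter> U)" "x' \<noteq> y"
      have px: "partial x'" using C_partial x x' True by blast
      have xs: "x' \<subseteq> V" "card x' = k" using C_sub x' by auto
      have "mixed x' y"
      proof (rule ccontr)
        assume nm: "\<not> mixed x' y"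
        obtain p where p: "p\<in>x'" "p\<notin>y" using ex_diff[OF xs(1) ys(1)] xs ys x' by auto
        obtain Ui where Ui: "Ui\<in>P" "p\<in>Ui" using blk p xs by blast
        show False using nomix_lt[OF nm Ui(1) p Ui(2)] x'(2) Ui by simp
      qed
      then obtain x'' where "x''\<in>C" "\<forall>U\<in>P. card (x'' \<inter> U) = card (x' \<inter> U)" "card (x'' - y) < card (x' - y)"
        using step_mixed[OF x'(1) px ys(1)] by blast
      thus "\<exists>x''\<in>C. (\<forall>U\<in>P. card (x'' \<inter> U) = card (y \<inter> U)) \<and> card (x'' - y) < card (x' - y)"
        using x'(2) by auto
    qed (use x e in auto)
  next
    case False
    have xs: "x \<subseteq> V" "card x = k" using C_sub x by auto
    have "x \<inter> U = y \<inter> U" if U: "U\<in>P" for U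
    proof -
      have fU: "finite U" using finU U .
      have c: "card (x \<inter> U) = 0 \<or> card (x \<inter> U) = a" using False U s_le[OF U, of x] unfolding partial_def by fastforce
      show ?thesis
      proof (cases "card (x \<inter> U) = 0")
        case True
        hence "card (y \<inter> U) = 0" using e U by simp
        hence "x \<inter> U = {}" "y \<inter> U = {}" using True fU by auto
        thus ?thesis by simp
      next
        case False
        hence "card (x \<inter> U) = card U" "card (y \<inter> U) = card U" using c e U card_block by auto
        hence "x \<inter> U = U" "y \<inter> U = U" using fU card_subset_eq by (metis inf_le2)+
        thus ?thesis by simp
      qed
    qed
    hence "x = y" using xs ys UP by blast
    thus ?thesis using x by simp
  qed
qed

lemma uniq_val: "cnt z v = 1 \<Longrightarrow> U\<in>P \<Longrightarrow> W\<in>P \<Longrightarrow> card (z \<inter> U) = v \<Longrightarrow> card (z \<inter> W) = v \<Longrightarrow> U = W"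
proof -
  assume "cnt z v = 1" "U\<in>P" "W\<in>P" "card (z \<inter> U) = v" "card (z \<inter> W) = v"
  moreover have "card {U\<in>P. card (z \<inter> U) = v} = 1" using \<open>cnt z v = 1\<close> unfolding cnt_def .
  moreover obtain Z where "{U\<in>P. card (z \<inter> U) = v} = {Z}" using card_1_singletonE[OF calculation(6)] by blast
  ultimately show "U = W" by blast
qed

lemma reach_one:
  assumes x0: "x0\<in>C" and U0: "U0\<in>P" and oth: "\<forall>U\<in>P. U \<noteq> U0 \<longrightarrow> card (x0 \<inter> U) = c"
  and dc: "card (x0 \<inter> U0) \<noteq> c"
  and y: "y \<in> ksubsets V k" "cnt y = cnt x0"
  shows "y\<in>C"
proof -
  define d where "d = card (x0 \<inter> U0)"
  have s1: "{U\<in>P. card (x0 \<inter> U) = d} = {U0}" using oth U0 dc d_def by auto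
  have s2: "{U\<in>P. card (x0 \<inter> U) = c} = P - {U0}" using oth U0 dc d_def by auto
  have "cnt x0 d = 1" using s1 unfolding cnt_def by simp
  hence "cnt y d = 1" using y by simp
  hence "cnt y d \<noteq> 0" by simp
  then obtain U' where U': "U'\<in>P" "card (y \<inter> U') = d" using cnt_pos by blast
  have cb: "card (P - {U'}) = card (P - {U0})" using U' U0 finP by simp
  have "cnt x0 c = card (P - {U0})" using s2 unfolding cnt_def by simp
  hence "cnt y c = card (P - {U0})" using y by simp
  hence c3: "card {U\<in>P. card (y \<inter> U) = c} = card (P - {U'})" using cb unfolding cnt_def by simp
  have c4: "{U\<in>P. card (y \<inter> U) = c} \<subseteq> P - {U'}" using U' dc d_def by auto
  have c5: "finite (P - {U'})" using finP by simp
  have s3: "{U\<in>P. card (y \<inter> U) = c} = P - {U'}" using card_subset_eq[OF c5 c4 c3] .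
  obtain g where g: "g\<in>G" "g ` U0 = U'" using blocks_trans U0 U' by blast
  have x'C: "g ` x0 \<in> C" using C_g g x0 by blast
  have "\<forall>U\<in>P. card (g ` x0 \<inter> U) = card (y \<inter> U)"
  proof
    fix U assume U: "U\<in>P"
    define W where "W = inv g ` U"
    have W: "W\<in>P" "g ` W = U" using U pres g_inv g g_inv_img W_def by auto
    have "card (g ` x0 \<inter> U) = card (g ` (x0 \<inter> W))" using W g_inter[OF g(1), of x0 W] by simp
    also have "\<dots> = card (x0 \<inter> W)" using g_card[OF g(1)] by simp
    finally have "card (g ` x0 \<inter> U) = card (x0 \<inter> W)" .
    show "card (g ` x0 \<inter> U) = card (y \<inter> U)"
    proof (cases "W = U0")
      case True
      thus ?thesis using W g U' d_def \<open>card (g ` x0 \<inter> U) = card (x0 \<inter> W)\<close> by simp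
    next
      case False
      have "U \<noteq> U'"
      proof
        assume "U = U'"
        hence "g ` W = g ` U0" using W g by simp
        thus False using False g_inj[OF g(1)] by (simp add: inj_image_eq_iff)
      qed
      hence "U \<in> {U\<in>P. card (y \<inter> U) = c}" using s3 U by simp
      hence "card (y \<inter> U) = c" by simp
      moreover have "card (x0 \<inter> W) = c" using oth W(1) False by simp
      ultimately show ?thesis using \<open>card (g ` x0 \<inter> U) = card (x0 \<inter> W)\<close> by simp
    qed
  qed
  thus ?thesis using reach_vec[OF x'C y(1)] by blast
qed

lemma step7_0:
  assumes x: "x\<in>C" "partial x" and y: "y \<subseteq> V" "card y = k" and nm: "\<not> mixed x y"
  and a: "a = 2" and c1: "cnt x 1 = 1" and m: "m\<in>P" "card (x \<inter> m) = 1" "card (y \<inter> m) = 0"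
  shows "\<exists>x'\<in>C. card (x' - y) < card (x - y)"
proof -
  have xs: "x \<subseteq> V" "card x = k" using C_sub x by auto
  have "x \<noteq> y" using m by auto
  obtain q where q: "q\<in>y" "q\<notin>x" using ex_diff[OF xs(1) y(1)] xs y \<open>x \<noteq> y\<close> by auto
  obtain Uj where Uj: "Uj\<in>P" "q\<in>Uj" using blk q y by blast
  have l2: "card (x \<inter> Uj) < card (y \<inter> Uj)" using nomix_gt[OF nm Uj(1) q Uj(2)] .
  have "Uj \<noteq> m" using l2 m by auto
  hence "card (x \<inter> Uj) \<noteq> 1" using uniq_val[OF c1 Uj(1) m(1)] m by auto
  moreover have "card (y \<inter> Uj) \<le> 2" using s_le[OF Uj(1)] a by simp
  ultimately have "card (x \<inter> Uj) = 0" using l2 by linarith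
  thus ?thesis using step_pair[OF x y(1) m(1) Uj(1) \<open>Uj \<noteq> m\<close>[symmetric]] m l2 by simp
qed

lemma reach7:
  assumes x0: "x0\<in>C" "partial x0" and a: "a = 2" and U0: "U0\<in>P" "card (x0 \<inter> U0) = 1"
  and oth: "\<forall>U\<in>P. U \<noteq> U0 \<longrightarrow> card (x0 \<inter> U) \<noteq> 1"
  and y: "y \<in> ksubsets V k" "cnt y = cnt x0"
  shows "y\<in>C"
proof -
  have ys: "y \<subseteq> V" "card y = k" using y unfolding ksubsets_def by auto
  have c0: "cnt x0 1 = 1"
  proof -
    have "{U\<in>P. card (x0 \<inter> U) = 1} = {U0}" using oth U0 by auto
    thus ?thesis unfolding cnt_def by simp
  qed
  have cy: "cnt y 1 = 1" using c0 y by simp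
  show ?thesis
  proof (rule reach_gen[OF ys(1), of "\<lambda>_. True"])
    fix x assume x: "x\<in>C" "True" "x \<noteq> y"
    have px: "partial x" using C_partial x0 x by blast
    have cx: "cnt x 1 = 1" using c0 C_cnt[OF x0(1) x(1)] by simp
    have xs: "x \<subseteq> V" "card x = k" using C_sub x by auto
    show "\<exists>x'\<in>C. True \<and> card (x' - y) < card (x - y)"
    proof (cases "mixed x y")
      case True thus ?thesis using step_mixed[OF x(1) px ys(1)] by blast
    next
      case nm: False
      obtain m where m: "m\<in>P" "card (x \<inter> m) = 1" using cx cnt_pos by (metis one_neq_zero)
      have ym: "card (y \<inter> m) \<le> 2" using s_le[OF m(1)] a by simp
      consider "card (y \<inter> m) = 0" | "card (y \<inter> m) = 2" | "card (y \<inter> m) = 1" using ym by linarith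
      thus ?thesis
      proof cases
        case 1 thus ?thesis using step7_0[OF x(1) px ys nm a cx m] by blast
      next
        case 2
        obtain p where p: "p\<in>x" "p\<notin>y" using ex_diff[OF xs(1) ys(1)] xs ys x by auto
        obtain Ui where Ui: "Ui\<in>P" "p\<in>Ui" using blk p xs by blast
        have l1: "card (y \<inter> Ui) < card (x \<inter> Ui)" using nomix_lt[OF nm Ui(1) p Ui(2)] .
        have "Ui \<noteq> m" using l1 m 2 by auto
        hence "card (x \<inter> Ui) \<noteq> 1" using uniq_val[OF cx Ui(1) m(1)] m by auto
        moreover have "card (x \<inter> Ui) \<le> 2" using s_le[OF Ui(1)] a by simp
        ultimately have "card (x \<inter> Ui) = 2" using l1 by linarith
        thus ?thesis using step_pair[OF x(1) px ys(1) Ui(1) m(1) \<open>Ui \<noteq> m\<close> l1] m 2 by simp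
      next
        case 3
        obtain p where p: "p\<in>x" "p\<notin>y" using ex_diff[OF xs(1) ys(1)] xs ys x by auto
        obtain Ui where Ui: "Ui\<in>P" "p\<in>Ui" using blk p xs by blast
        have l1: "card (y \<inter> Ui) < card (x \<inter> Ui)" using nomix_lt[OF nm Ui(1) p Ui(2)] .
        have "Ui \<noteq> m" using l1 m 3 by auto
        hence "card (x \<inter> Ui) \<noteq> 1" using uniq_val[OF cx Ui(1) m(1)] m by auto
        moreover have "card (x \<inter> Ui) \<le> 2" using s_le[OF Ui(1)] a by simp
        ultimately have xi: "card (x \<inter> Ui) = 2" using l1 by linarith
        have "card (y \<inter> Ui) \<noteq> 1" using uniq_val[OF cy Ui(1) m(1)] 3 \<open>Ui \<noteq> m\<close> by auto
        hence yi: "card (y \<inter> Ui) = 0" using l1 xi by linarith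
        have "card (x \<inter> m) < a" using m a by simp
        then obtain r where r: "r\<in>m" "r\<notin>x" using get_q[OF m(1)] by blast
        have rV: "r\<in>V" using r m subV by auto
        let ?x1 = "insert r (x - {p})"
        have e: "cnt ?x1 = cnt x" using cross_keeps[of p x r Ui m] p r Ui m \<open>Ui \<noteq> m\<close> xi by simp
        have x1C: "?x1 \<in> C" using Kmv[OF x(1) px p(1) rV r(2) e] .
        have fx: "finite x" using xs finV finite_subset by blast
        show ?thesis
        proof (cases "r\<in>y")
          case True
          thus ?thesis using x1C mv_dist[OF fx p True r(2)] by blast
        next
          case False
          have d: "card (?x1 - y) = card (x - y)"
          proof -
            have "?x1 - y = insert r ((x - y) - {p})" using False by auto
            moreover have "r \<notin> (x - y) - {p}" using r by auto
            moreover have "p \<in> x - y" using p by auto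
            moreover have fxy: "finite (x - y)" using fx by simp
            ultimately have "card (?x1 - y) = Suc (card ((x - y) - {p}))" by simp
            also have "\<dots> = card (x - y)" using card_Suc_Diff1[OF fxy \<open>p \<in> x - y\<close>] .
            finally show ?thesis .
          qed
          have px1: "partial ?x1" using C_partial x0 x1C by blast
          have cx1: "cnt ?x1 1 = 1" using cx e by simp
          have x1i: "card (?x1 \<inter> Ui) = 1" using mv_src[of p x r Ui m] p r Ui m \<open>Ui \<noteq> m\<close> xi by simp
          show ?thesis
          proof (cases "mixed ?x1 y")
            case True
            then obtain x2 where "x2\<in>C" "card (x2 - y) < card (?x1 - y)" using step_mixed[OF x1C px1 ys(1)] by blast
            thus ?thesis using d by auto
          next
            case False
            then obtain x2 where "x2\<in>C" "card (x2 - y) < card (?x1 - y)"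
              using step7_0[OF x1C px1 ys False a cx1 Ui(1) x1i yi] by blast
            thus ?thesis using d by auto
          qed
        qed
      qed
    qed
  qed (use x0 in auto)
qed

lemma sum_by_vals:
  assumes A: "finite A" and f: "\<And>U. U\<in>P \<Longrightarrow> f U \<in> A"
  shows "(\<Sum>U\<in>P. g (f U)) = (\<Sum>v\<in>A. g v * card {U\<in>P. f U = v})"
proof -
  have "(\<Sum>U\<in>P. g (f U)) = (\<Sum>U\<in>P. \<Sum>v\<in>A. if f U = v then g v else 0)"
  proof (rule sum.cong)
    fix U assume "U\<in>P"
    hence "f U \<in> A" using f by blast
    thus "g (f U) = (\<Sum>v\<in>A. if f U = v then g v else 0)" using A by (simp add: sum.delta)
  qed simp
  also have "\<dots> = (\<Sum>v\<in>A. \<Sum>U\<in>P. if f U = v then g v else 0)" by (rule sum.swap)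
  also have "\<dots> = (\<Sum>v\<in>A. g v * card {U\<in>P. f U = v})"
  proof (rule sum.cong)
    fix v
    have "(\<Sum>U\<in>P. if f U = v then g v else 0) = (\<Sum>U\<in>{U\<in>P. f U = v}. g v)"
      using sum.inter_filter[OF finP, of "\<lambda>_. g v" "\<lambda>U. f U = v"] by simp
    thus "(\<Sum>U\<in>P. if f U = v then g v else 0) = g v * card {U\<in>P. f U = v}" by simp
  qed simp
  finally show ?thesis .
qed

lemma k_vals: "x\<in>C \<Longrightarrow> finite A \<Longrightarrow> (\<And>U. U\<in>P \<Longrightarrow> card (x \<inter> U) \<in> A) \<Longrightarrow> k = (\<Sum>v\<in>A. v * cnt x v)"
proof -
  assume x: "x\<in>C" and A: "finite A" and f: "\<And>U. U\<in>P \<Longrightarrow> card (x \<inter> U) \<in> A"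
  have "k = (\<Sum>U\<in>P. card (x \<inter> U))" using C_sub[OF x] card_sum[of x] by simp
  also have "\<dots> = (\<Sum>v\<in>A. v * cnt x v)" unfolding cnt_def using sum_by_vals[OF A f, where g = "\<lambda>v. v"] by simp
  finally show ?thesis .
qed

lemma b_vals: "finite A \<Longrightarrow> (\<And>U. U\<in>P \<Longrightarrow> card (x \<inter> U) \<in> A) \<Longrightarrow> b = (\<Sum>v\<in>A. cnt x v)"
proof -
  assume A: "finite A" and f: "\<And>U. U\<in>P \<Longrightarrow> card (x \<inter> U) \<in> A"
  have "b = (\<Sum>U\<in>P. (\<lambda>_. 1::nat) (card (x \<inter> U)))" unfolding b_def by simp
  also have "\<dots> = (\<Sum>v\<in>A. cnt x v)" unfolding cnt_def using sum_by_vals[OF A f, where g = "\<lambda>_. 1::nat"] by simp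
  finally show ?thesis .
qed

lemma cnt0: "cnt y 0 + (\<Sum>v\<in>{1..a}. cnt y v) = b"
proof -
  have "b = (\<Sum>v\<in>{0..a}. cnt y v)" using b_vals[of "{0..a}" y] s_le by simp
  also have "\<dots> = cnt y 0 + (\<Sum>v\<in>{1..a}. cnt y v)" by (simp add: sum.atLeast_Suc_atMost)
  finally show ?thesis by simp
qed

lemma count_utype: "count (utype P y) v = (if v = 0 then 0 else cnt y v)"
proof -
  have "count (image_mset (\<lambda>U. card (y \<inter> U)) (mset_set P)) v = cnt y v"
  proof -
    have "count (image_mset (\<lambda>U. card (y \<inter> U)) (mset_set P)) v
        = (\<Sum>U\<in>(\<lambda>U. card (y \<inter> U)) -` {v} \<inter> P. 1)"
      unfolding count_image_mset using finP by (intro sum.cong) auto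
    also have "\<dots> = card ((\<lambda>U. card (y \<inter> U)) -` {v} \<inter> P)" by simp
    also have "(\<lambda>U. card (y \<inter> U)) -` {v} \<inter> P = {U\<in>P. card (y \<inter> U) = v}" by auto
    finally show ?thesis unfolding cnt_def .
  qed
  thus ?thesis unfolding utype_def by simp
qed

lemma TC:
  assumes x0: "x0\<in>C" and reach: "\<And>y. y \<in> ksubsets V k \<Longrightarrow> cnt y = cnt x0 \<Longrightarrow> y\<in>C"
  and ct: "\<And>v. 0 < v \<Longrightarrow> count t v = cnt x0 v"
  shows "C = type_code V k P t"
proof
  have ut: "utype P y = nz t \<longleftrightarrow> (\<forall>v. 0 < v \<longrightarrow> cnt y v = cnt x0 v)" for y
  proof -
    have "utype P y = nz t \<longleftrightarrow> (\<forall>v. count (utype P y) v = count (nz t) v)" by (simp add: multiset_eq_iff)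
    also have "\<dots> \<longleftrightarrow> (\<forall>v. 0 < v \<longrightarrow> cnt y v = cnt x0 v)"
      unfolding count_utype nz_def using ct by (auto simp: count_filter_mset)
    finally show ?thesis .
  qed
  show "C \<subseteq> type_code V k P t"
  proof
    fix y assume y: "y\<in>C"
    have "y \<in> ksubsets V k" using C_sub[OF y] unfolding ksubsets_def by auto
    moreover have "cnt y = cnt x0" using C_cnt y x0 by blast
    ultimately show "y \<in> type_code V k P t" unfolding type_code_def using ut by auto
  qed
  show "type_code V k P t \<subseteq> C"
  proof
    fix y assume y: "y \<in> type_code V k P t"
    hence yk: "y \<in> ksubsets V k" and e: "\<forall>v. 0 < v \<longrightarrow> cnt y v = cnt x0 v" unfolding type_code_def using ut by auto
    have "(\<Sum>v\<in>{1..a}. cnt y v) = (\<Sum>v\<in>{1..a}. cnt x0 v)" using e by (intro sum.cong) auto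
    hence "cnt y 0 = cnt x0 0" using cnt0[of y] cnt0[of x0] by linarith
    hence "cnt y = cnt x0" using e by (metis neq0_conv ext)
    thus "y\<in>C" using reach yk by blast
  qed
qed

lemma C_ne: "C \<noteq> {}" using code unfolding is_code_def by blast

lemma cnt_empty: "(\<And>U. U\<in>P \<Longrightarrow> card (x \<inter> U) \<noteq> v) \<Longrightarrow> cnt x v = 0"
proof -
  assume h: "\<And>U. U\<in>P \<Longrightarrow> card (x \<inter> U) \<noteq> v"
  have e: "{U\<in>P. card (x \<inter> U) = v} = {}" using h by blast
  show ?thesis unfolding cnt_def e by (simp only: card.empty)
qed

lemma sum_one:
  assumes U0: "U0\<in>P" and oth: "\<forall>U\<in>P. U \<noteq> U0 \<longrightarrow> card (x \<inter> U) = c" and x: "x \<subseteq> V"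
  shows "card x = card (x \<inter> U0) + (b - 1) * c"
proof -
  have "card x = card (x \<inter> U0) + (\<Sum>U\<in>P-{U0}. card (x \<inter> U))"
    using card_sum[OF x] sum.remove[OF finP U0, of "\<lambda>U. card (x \<inter> U)"] by simp
  also have "(\<Sum>U\<in>P-{U0}. card (x \<inter> U)) = (\<Sum>U\<in>P-{U0}. c)" using oth by (intro sum.cong) auto
  also have "\<dots> = (b - 1) * c" using U0 finP b_def by simp
  finally show ?thesis .
qed

lemma cnt_one:
  assumes U0: "U0\<in>P" and oth: "\<forall>U\<in>P. U \<noteq> U0 \<longrightarrow> card (x \<inter> U) = c" and dc: "card (x \<inter> U0) \<noteq> c"
  shows "cnt x v = (if v = card (x \<inter> U0) then 1 else 0) + (if v = c then b - 1 else 0)"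
proof -
  have "{U\<in>P. card (x \<inter> U) = v} = (if v = card (x \<inter> U0) then {U0} else {}) \<union> (if v = c then P - {U0} else {})"
    using U0 oth dc by auto
  moreover have "card (P - {U0}) = b - 1" using U0 finP b_def by simp
  ultimately show ?thesis unfolding cnt_def using dc by (auto simp: card_Un_disjoint)
qed

lemma out1:
  assumes x0: "x0\<in>C" and U0: "U0\<in>P" and oth: "\<forall>U\<in>P. U \<noteq> U0 \<longrightarrow> card (x0 \<inter> U) = 0"
  and d: "card (x0 \<inter> U0) \<noteq> 0"
  shows "k \<le> a \<and> C = type_code V k P {#k#}"
proof -
  have xs: "x0 \<subseteq> V" "card x0 = k" using C_sub x0 by auto
  have kk: "card (x0 \<inter> U0) = k" using sum_one[OF U0 oth xs(1)] xs by simp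
  have "k \<le> a" using s_le[OF U0, of x0] kk by simp
  moreover have "C = type_code V k P {#k#}"
  proof (rule TC[OF x0])
    fix y assume "y \<in> ksubsets V k" "cnt y = cnt x0"
    thus "y\<in>C" using reach_one[OF x0 U0 oth d] by blast
  next
    fix v :: nat assume "0 < v"
    thus "count {#k#} v = cnt x0 v" using cnt_one[OF U0 oth d, of v] kk by auto
  qed
  ultimately show ?thesis by blast
qed

lemma out2:
  assumes x0: "x0\<in>C" and U0: "U0\<in>P" and oth: "\<forall>U\<in>P. U \<noteq> U0 \<longrightarrow> card (x0 \<inter> U) = a"
  and d: "card (x0 \<inter> U0) \<noteq> a"
  shows "k + a \<ge> card V \<and> C = type_code V k P ({#k + a - card V#} + replicate_mset (b - 1) a)"
proof -
  have xs: "x0 \<subseteq> V" "card x0 = k" using C_sub x0 by auto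
  have kk: "k = card (x0 \<inter> U0) + (b - 1) * a" using sum_one[OF U0 oth xs(1)] xs by simp
  have "(b - 1) * a + a = card V" using vab b2 by (cases b) (auto simp: algebra_simps)
  hence kd: "k + a - card V = card (x0 \<inter> U0)" "k + a \<ge> card V" using kk by auto
  moreover have "C = type_code V k P ({#k + a - card V#} + replicate_mset (b - 1) a)"
  proof (rule TC[OF x0])
    fix y assume "y \<in> ksubsets V k" "cnt y = cnt x0"
    thus "y\<in>C" using reach_one[OF x0 U0 oth d] by blast
  next
    fix v :: nat assume "0 < v"
    thus "count ({#k + a - card V#} + replicate_mset (b - 1) a) v = cnt x0 v"
      using cnt_one[OF U0 oth d, of v] kd by auto
  qed
  ultimately show ?thesis by blast
qed

lemma two_facts:
  assumes x0: "x0\<in>C" and w: "\<forall>U\<in>P. card (x0 \<inter> U) = w \<or> card (x0 \<inter> U) = w + 1"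
  shows "b = cnt x0 w + cnt x0 (w + 1)" "k = w * cnt x0 w + (w + 1) * cnt x0 (w + 1)"
    "\<And>v. v \<noteq> w \<Longrightarrow> v \<noteq> w + 1 \<Longrightarrow> cnt x0 v = 0"
proof -
  have f: "\<And>U. U\<in>P \<Longrightarrow> card (x0 \<inter> U) \<in> {w, w+1}" using w by auto
  show "b = cnt x0 w + cnt x0 (w + 1)" using b_vals[OF _ f] by simp
  show "k = w * cnt x0 w + (w + 1) * cnt x0 (w + 1)" using k_vals[OF x0 _ f] by simp
  show "\<And>v. v \<noteq> w \<Longrightarrow> v \<noteq> w + 1 \<Longrightarrow> cnt x0 v = 0" using w by (intro cnt_empty) auto
qed

lemma out3:
  assumes x0: "x0\<in>C" "partial x0" and le: "\<forall>U\<in>P. card (x0 \<inter> U) \<le> 1"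
  shows "k \<le> b \<and> C = type_code V k P (replicate_mset k 1)"
proof -
  have w: "\<forall>U\<in>P. card (x0 \<inter> U) = 0 \<or> card (x0 \<inter> U) = 0 + 1" using le by auto
  note tf = two_facts[OF x0(1) w]
  have "k \<le> b" using tf by simp
  moreover have "C = type_code V k P (replicate_mset k 1)"
  proof (rule TC[OF x0(1)])
    fix y assume "y \<in> ksubsets V k" "cnt y = cnt x0"
    thus "y\<in>C" using reach_two[OF x0 w] by blast
  next
    fix v :: nat assume "0 < v"
    thus "count (replicate_mset k 1) v = cnt x0 v" using tf by auto
  qed
  ultimately show ?thesis by blast
qed

lemma out4:
  assumes x0: "x0\<in>C" "partial x0" and ge: "\<forall>U\<in>P. a - 1 \<le> card (x0 \<inter> U)"
  shows "k + b \<ge> card V \<and> C = type_code V k P (replicate_mset (card V - k) (a - 1) + replicate_mset (b + k - card V) a)"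
proof -
  have a1: "a - 1 + 1 = a" using a2 by simp
  have w: "\<forall>U\<in>P. card (x0 \<inter> U) = a - 1 \<or> card (x0 \<inter> U) = a - 1 + 1"
    using ge s_le[of _ x0] a1 by (metis le_antisym le_eq_less_or_eq Suc_leI Suc_eq_plus1)
  note tf = two_facts[OF x0(1) w]
  define n1 where "n1 = cnt x0 (a - 1)"
  define n2 where "n2 = cnt x0 a"
  have bn: "b = n1 + n2" and kn: "k = (a - 1) * n1 + a * n2" using tf a1 n1_def n2_def by auto
  have "card V = k + n1" using vab bn kn a2 by (cases a) (auto simp: algebra_simps)
  hence cv: "card V - k = n1" "b + k - card V = n2" "k + b \<ge> card V" using bn by auto
  moreover have "C = type_code V k P (replicate_mset (card V - k) (a - 1) + replicate_mset (b + k - card V) a)"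
  proof (rule TC[OF x0(1)])
    fix y assume "y \<in> ksubsets V k" "cnt y = cnt x0"
    thus "y\<in>C" using reach_two[OF x0 w] by blast
  next
    fix v :: nat assume "0 < v"
    show "count (replicate_mset (card V - k) (a - 1) + replicate_mset (b + k - card V) a) v = cnt x0 v"
      using tf(3)[of v] a1 cv n1_def n2_def by auto
  qed
  ultimately show ?thesis by blast
qed

lemma out5:
  assumes x0: "x0\<in>C" "partial x0" and c: "\<forall>U\<in>P. card (x0 \<inter> U) = c" and c1: "c \<noteq> 1"
  shows "\<exists>c. k = c * b \<and> 1 < c \<and> c \<le> a - 1 \<and> C = type_code V k P (replicate_mset b c)"
proof -
  have w: "\<forall>U\<in>P. card (x0 \<inter> U) = c \<or> card (x0 \<inter> U) = c + 1" using c by auto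
  note tf = two_facts[OF x0(1) w]
  have z: "cnt x0 (c + 1) = 0" using c by (intro cnt_empty) auto
  have kb: "k = c * b" using tf z by simp
  have "c \<noteq> 0" using kb k2 by (cases "c = 0") auto
  hence "1 < c" using c1 by simp
  moreover have "c \<noteq> a" using kb kv vab by (cases "c = a") auto
  hence "c \<le> a - 1" using c s_le[of _ x0] Pne by fastforce
  moreover have "C = type_code V k P (replicate_mset b c)"
  proof (rule TC[OF x0(1)])
    fix y assume "y \<in> ksubsets V k" "cnt y = cnt x0"
    thus "y\<in>C" using reach_two[OF x0 w] by blast
  next
    fix v :: nat assume "0 < v"
    show "count (replicate_mset b c) v = cnt x0 v" using tf z by auto
  qed
  ultimately show ?thesis using kb by blast
qed

lemma out6:
  assumes x0: "x0\<in>C" "partial x0" and b2': "card P = 2" and wp: "0 < w" "w + 1 < a"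
  and w: "\<forall>U\<in>P. card (x0 \<inter> U) = w \<or> card (x0 \<inter> U) = w + 1"
  and e1: "\<exists>U\<in>P. card (x0 \<inter> U) = w" and e2: "\<exists>U\<in>P. card (x0 \<inter> U) = w + 1"
  shows "odd k \<and> a \<ge> 3 \<and> b = 2 \<and> C = type_code V k P {#(k - 1) div 2, (k + 1) div 2#}"
proof -
  note tf = two_facts[OF x0(1) w]
  have "cnt x0 w \<noteq> 0" "cnt x0 (w+1) \<noteq> 0" using e1 e2 cnt_pos by blast+
  moreover have "b = 2" using b2' b_def by simp
  ultimately have n: "cnt x0 w = 1" "cnt x0 (w+1) = 1" using tf by auto
  hence kk: "k = 2 * w + 1" using tf by simp
  have d: "(k - 1) div 2 = w" "(k + 1) div 2 = w + 1" using kk by auto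
  have "C = type_code V k P {#(k - 1) div 2, (k + 1) div 2#}"
  proof (rule TC[OF x0(1)])
    fix y assume "y \<in> ksubsets V k" "cnt y = cnt x0"
    thus "y\<in>C" using reach_two[OF x0 w] by blast
  next
    fix v :: nat assume "0 < v"
    show "count {#(k - 1) div 2, (k + 1) div 2#} v = cnt x0 v" using tf(3)[of v] n d by auto
  qed
  thus ?thesis using kk wp \<open>b = 2\<close> by auto
qed

lemma out7:
  assumes x0: "x0\<in>C" "partial x0" and a: "a = 2" and U0: "U0\<in>P" "card (x0 \<inter> U0) = 1"
  and oth: "\<forall>U\<in>P. U \<noteq> U0 \<longrightarrow> card (x0 \<inter> U) \<noteq> 1"
  shows "odd k \<and> a = 2 \<and> b \<ge> 3 \<and> C = type_code V k P ({#1#} + replicate_mset ((k - 1) div 2) 2)"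
proof -
  have f: "\<And>U. U\<in>P \<Longrightarrow> card (x0 \<inter> U) \<in> {0,1,2}" using s_le[of _ x0] a by fastforce
  have c1: "cnt x0 1 = 1"
  proof -
    have "{U\<in>P. card (x0 \<inter> U) = 1} = {U0}" using oth U0 by auto
    thus ?thesis unfolding cnt_def by simp
  qed
  have kk: "k = 1 + 2 * cnt x0 2" using k_vals[OF x0(1) _ f] c1 by simp
  have bb: "b = cnt x0 0 + 1 + cnt x0 2" using b_vals[OF _ f] c1 by simp
  have z: "cnt x0 v = 0" if "v > 2" for v using s_le[of _ x0] a that by (intro cnt_empty) fastforce
  have "b \<ge> 3" using kk k2 kv vab a by (simp add: mult.commute)
  moreover have "C = type_code V k P ({#1#} + replicate_mset ((k - 1) div 2) 2)"
  proof (rule TC[OF x0(1)])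
    fix y assume "y \<in> ksubsets V k" "cnt y = cnt x0"
    thus "y\<in>C" using reach7[OF x0 a U0 oth] by blast
  next
    fix v :: nat assume v: "0 < v"
    have "v = 1 \<or> v = 2 \<or> v > 2" using v by linarith
    thus "count ({#1#} + replicate_mset ((k - 1) div 2) 2) v = cnt x0 v" using c1 kk z by auto
  qed
  ultimately show ?thesis using kk a by auto
qed

lemma union_blocks: "S \<subseteq> P \<Longrightarrow> card (\<Union>S) = a * card S"
proof -
  assume S: "S \<subseteq> P"
  have "card (\<Union>S) = sum card S"
  proof (rule card_Union_disjoint)
    show "pairwise disjnt S" using S disj unfolding pairwise_def disjnt_def by blast
    show "\<And>A. A \<in> S \<Longrightarrow> finite A" using S finU by blast
  qed
  also have "\<dots> = (\<Sum>U\<in>S. a)" using S card_block by (intro sum.cong) auto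
  finally show ?thesis by simp
qed

lemma outC:
  assumes x0: "x0\<in>C" and np: "\<not> partial x0"
  shows "\<exists>k0 C0. k = a * k0 \<and> 1 \<le> k0 \<and> k0 \<le> b - 1 \<and> C0 \<subseteq> ksubsets P k0 \<and> C = (\<lambda>S. \<Union>S) ` C0"
proof -
  have f: "\<And>U. U\<in>P \<Longrightarrow> card (x0 \<inter> U) \<in> {0,a}" using np s_le[of _ x0] unfolding partial_def by fastforce
  define k0 where "k0 = cnt x0 a"
  have kk: "k = a * k0" using k_vals[OF x0 _ f] a2 k0_def by simp
  have bb: "b = cnt x0 0 + k0" using b_vals[OF _ f] a2 k0_def by simp
  have k01: "1 \<le> k0" using kk k2 by (cases k0) auto
  have "k0 \<noteq> b" using kk kv vab by auto
  hence k0b: "k0 \<le> b - 1" using bb by simp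
  define C0 where "C0 = {S. S \<subseteq> P \<and> \<Union>S \<in> C}"
  have "C0 \<subseteq> ksubsets P k0"
  proof
    fix S assume "S \<in> C0"
    hence S: "S \<subseteq> P" "\<Union>S \<in> C" unfolding C0_def by auto
    have "a * card S = a * k0" using union_blocks[OF S(1)] C_sub[OF S(2)] kk by auto
    hence "card S = k0" using a2 by simp
    thus "S \<in> ksubsets P k0" using S unfolding ksubsets_def by simp
  qed
  moreover have "C = (\<lambda>S. \<Union>S) ` C0"
  proof
    show "(\<lambda>S. \<Union>S) ` C0 \<subseteq> C" unfolding C0_def by auto
    show "C \<subseteq> (\<lambda>S. \<Union>S) ` C0"
    proof
      fix x assume x: "x\<in>C"
      have xs: "x \<subseteq> V" using C_sub x by auto
      have fx: "\<And>U. U\<in>P \<Longrightarrow> card (x \<inter> U) \<in> {0,a}"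
        using vals_cnt[OF C_cnt[OF x0 x]] f by blast
      have "x = \<Union>{U\<in>P. U \<subseteq> x}"
      proof
        show "\<Union>{U\<in>P. U \<subseteq> x} \<subseteq> x" by auto
        show "x \<subseteq> \<Union>{U\<in>P. U \<subseteq> x}"
        proof
          fix p assume p: "p\<in>x"
          then obtain U where U: "U\<in>P" "p\<in>U" using blk xs by blast
          have "card (x \<inter> U) \<noteq> 0" using p U finU by auto
          hence "card (x \<inter> U) = card U" using fx[OF U(1)] card_block[OF U(1)] by auto
          hence "x \<inter> U = U" using finU[OF U(1)] card_subset_eq by (metis inf_le2)
          thus "p \<in> \<Union>{U\<in>P. U \<subseteq> x}" using U by blast
        qed
      qed
      moreover have "{U\<in>P. U \<subseteq> x} \<in> C0" using calculation x unfolding C0_def by auto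
      ultimately show "x \<in> (\<lambda>S. \<Union>S) ` C0" by blast
    qed
  qed
  ultimately show ?thesis using kk k01 k0b by blast
qed

lemma main_inner:
  "((k \<le> a \<and> C = type_code V k P {#k#})
            \<or> (k + a \<ge> card V \<and> C = type_code V k P ({#k + a - card V#} + replicate_mset (b - 1) a))
            \<or> (k \<le> b \<and> C = type_code V k P (replicate_mset k 1))
            \<or> (k + b \<ge> card V \<and>
                 C = type_code V k P (replicate_mset (card V - k) (a - 1) + replicate_mset (b + k - card V) a))
            \<or> (\<exists>c. k = c * b \<and> 1 < c \<and> c \<le> a - 1 \<and> C = type_code V k P (replicate_mset b c))
            \<or> (odd k \<and> a \<ge> 3 \<and> b = 2 \<and> C = type_code V k P {#(k - 1) div 2, (k + 1) div 2#})
            \<or> (odd k \<and> a = 2 \<and> b \<ge> 3 \<and>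
                 C = type_code V k P ({#1#} + replicate_mset ((k - 1) div 2) 2)))
   \<or> (b \<ge> 4 \<and> (\<exists>k0 C0. k = a * k0 \<and> 1 \<le> k0 \<and> k0 \<le> b - 1 \<and> C0 \<subseteq> ksubsets P k0 \<and> C = (\<lambda>S. \<Union>S) ` C0))"
proof -
  obtain x0 where x0: "x0\<in>C" using C_ne by blast
  show ?thesis
  proof (cases "partial x0")
    case px: True
    let ?s = "\<lambda>U. card (x0 \<inter> U)"
    have cl: "(\<exists>U0\<in>P. 0 < ?s U0 \<and> (\<forall>U\<in>P. U \<noteq> U0 \<longrightarrow> ?s U = 0))
       \<or> (\<exists>U0\<in>P. ?s U0 < a \<and> (\<forall>U\<in>P. U \<noteq> U0 \<longrightarrow> ?s U = a))
       \<or> (\<forall>U\<in>P. ?s U \<le> 1)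
       \<or> (\<forall>U\<in>P. a - 1 \<le> ?s U)
       \<or> (\<exists>c. \<forall>U\<in>P. ?s U = c)
       \<or> (card P = 2 \<and> (\<exists>w. 0 < w \<and> w + 1 < a \<and> (\<forall>U\<in>P. ?s U = w \<or> ?s U = w + 1)
              \<and> (\<exists>U\<in>P. ?s U = w) \<and> (\<exists>U\<in>P. ?s U = w + 1)))
       \<or> (a = 2 \<and> (\<exists>U0\<in>P. ?s U0 = 1 \<and> (\<forall>U\<in>P. U \<noteq> U0 \<longrightarrow> ?s U \<noteq> 1)))"
    proof (rule classify[where P=P and s="?s" and a=a])
      show "finite P" using finP .
      show "2 \<le> card P" using b2 b_def by simp
      show "2 \<le> a" using a2 .
      show "\<forall>U\<in>P. ?s U \<le> a" using s_le by blast
      show "\<exists>U\<in>P. 0 < ?s U \<and> ?s U < a" using px unfolding partial_def .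
      fix U1 U2 U3 U4
      assume "U1 \<in> P \<and> U2 \<in> P \<and> U1 \<noteq> U2 \<and> 0 < ?s U1 \<and> ?s U2 < a \<and> ?s U1 \<noteq> ?s U2 + 1"
        "U3 \<in> P \<and> U4 \<in> P \<and> U3 \<noteq> U4 \<and> 0 < ?s U3 \<and> ?s U4 < a \<and> ?s U3 \<noteq> ?s U4 + 1"
      thus "?s U1 = ?s U3 \<and> ?s U2 = ?s U4" using uniqU[OF x0 px, of U1 U2 U3 U4] by blast
    qed
    show ?thesis
    proof -
      consider (c1) "\<exists>U0\<in>P. 0 < ?s U0 \<and> (\<forall>U\<in>P. U \<noteq> U0 \<longrightarrow> ?s U = 0)"
        | (c2) "\<exists>U0\<in>P. ?s U0 < a \<and> (\<forall>U\<in>P. U \<noteq> U0 \<longrightarrow> ?s U = a)"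
        | (c3) "\<forall>U\<in>P. ?s U \<le> 1"
        | (c4) "\<forall>U\<in>P. a - 1 \<le> ?s U"
        | (c5) "\<exists>c. \<forall>U\<in>P. ?s U = c"
        | (c6) "card P = 2 \<and> (\<exists>w. 0 < w \<and> w + 1 < a \<and> (\<forall>U\<in>P. ?s U = w \<or> ?s U = w + 1)
              \<and> (\<exists>U\<in>P. ?s U = w) \<and> (\<exists>U\<in>P. ?s U = w + 1))"
        | (c7) "a = 2 \<and> (\<exists>U0\<in>P. ?s U0 = 1 \<and> (\<forall>U\<in>P. U \<noteq> U0 \<longrightarrow> ?s U \<noteq> 1))"
        using cl by argo
      thus ?thesis
      proof cases
        case c1
        then obtain U0 where "U0\<in>P" "0 < ?s U0" "\<forall>U\<in>P. U \<noteq> U0 \<longrightarrow> ?s U = 0" by blast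
        thus ?thesis using out1[OF x0, of U0] by simp
      next
        case c2
        then obtain U0 where "U0\<in>P" "?s U0 < a" "\<forall>U\<in>P. U \<noteq> U0 \<longrightarrow> ?s U = a" by blast
        thus ?thesis using out2[OF x0, of U0] by simp
      next
        case c3 thus ?thesis using out3[OF x0 px] by simp
      next
        case c4 thus ?thesis using out4[OF x0 px] by simp
      next
        case c5
        then obtain c where c: "\<forall>U\<in>P. ?s U = c" by blast
        show ?thesis
        proof (cases "c = 1")
          case True thus ?thesis using out3[OF x0 px] c by simp
        next
          case False thus ?thesis using out5[OF x0 px c] by simp
        qed
      next
        case c6
        then obtain w where "card P = 2" "0 < w" "w + 1 < a" "\<forall>U\<in>P. ?s U = w \<or> ?s U = w + 1"
              "\<exists>U\<in>P. ?s U = w" "\<exists>U\<in>P. ?s U = w + 1" by blast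
        thus ?thesis using out6[OF x0 px] by simp
      next
        case c7
        then obtain U0 where "a = 2" "U0\<in>P" "?s U0 = 1" "\<forall>U\<in>P. U \<noteq> U0 \<longrightarrow> ?s U \<noteq> 1" by blast
        thus ?thesis using out7[OF x0 px] by simp
      qed
    qed
  next
    case np: False
    show ?thesis
    proof (cases "b \<ge> 4")
      case True thus ?thesis using outC[OF x0 np] by simp
    next
      case False
      have f: "\<And>U. U\<in>P \<Longrightarrow> card (x0 \<inter> U) \<in> {0,a}" using np s_le[of _ x0] unfolding partial_def by fastforce
      define k0 where "k0 = cnt x0 a"
      have kk: "k = a * k0" using k_vals[OF x0 _ f] a2 k0_def by simp
      have bb: "b = cnt x0 0 + k0" using b_vals[OF _ f] a2 k0_def by simp
      have k01: "1 \<le> k0" using kk k2 by (cases k0) auto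
      have "k0 \<noteq> b" using kk kv vab by auto
      hence "k0 = 1 \<or> k0 = b - 1" using bb False k01 by linarith
      thus ?thesis
      proof
        assume "k0 = 1"
        hence "cnt x0 a \<noteq> 0" using k0_def by simp
        then obtain U0 where U0: "U0\<in>P" "card (x0 \<inter> U0) = a" using cnt_pos by blast
        have "\<forall>U\<in>P. U \<noteq> U0 \<longrightarrow> card (x0 \<inter> U) = 0"
        proof (intro ballI impI)
          fix U assume U: "U\<in>P" "U \<noteq> U0"
          have "card (x0 \<inter> U) \<noteq> a" using uniq_val[of x0 a U U0] U U0 \<open>k0 = 1\<close> k0_def by auto
          thus "card (x0 \<inter> U) = 0" using f[OF U(1)] by auto
        qed
        moreover have "card (x0 \<inter> U0) \<noteq> 0" using U0 a2 by simp
        ultimately show ?thesis using out1[OF x0 U0(1)] by simp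
      next
        assume "k0 = b - 1"
        hence "cnt x0 0 = 1" using bb b2 by simp
        hence "cnt x0 0 \<noteq> 0" by simp
        then obtain U0 where U0: "U0\<in>P" "card (x0 \<inter> U0) = 0" using cnt_pos by blast
        have "\<forall>U\<in>P. U \<noteq> U0 \<longrightarrow> card (x0 \<inter> U) = a"
        proof (intro ballI impI)
          fix U assume U: "U\<in>P" "U \<noteq> U0"
          have "card (x0 \<inter> U) \<noteq> 0" using uniq_val[of x0 0 U U0] U U0 \<open>cnt x0 0 = 1\<close> by auto
          thus "card (x0 \<inter> U) = a" using f[OF U(1)] by auto
        qed
        moreover have "card (x0 \<inter> U0) \<noteq> a" using U0 a2 by simp
        ultimately show ?thesis using out2[OF x0 U0(1)] by simp
      qed
    qed
  qed
qed

end

theorem proposition4p7: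
  fixes V :: "'a set" and k :: nat and C :: "'a set set" and G :: "('a \<Rightarrow> 'a) set"
  assumes "finite V"
    and "2 \<le> k" and "k + 2 \<le> card V"
    and "is_code V k C"
    and "perm_group_on V G"
    and "stabilises_code G C"
    and "neighbour_transitive V k G C"
    and "transitive_on V G"
    and "imprimitive_on V G"
  shows "(\<exists>P a b. uniform_partition V P a b \<and> card V = a * b \<and> a > 1 \<and> b > 1 \<and>
            ( (k \<le> a \<and> C = type_code V k P {#k#})
            \<or> (k + a \<ge> card V \<and> C = type_code V k P ({#k + a - card V#} + replicate_mset (b - 1) a))
            \<or> (k \<le> b \<and> C = type_code V k P (replicate_mset k 1))
            \<or> (k + b \<ge> card V \<and>
                 C = type_code V k P (replicate_mset (card V - k) (a - 1) + replicate_mset (b + k - card V) a))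
            \<or> (\<exists>c. k = c * b \<and> 1 < c \<and> c \<le> a - 1 \<and> C = type_code V k P (replicate_mset b c))
            \<or> (odd k \<and> a \<ge> 3 \<and> b = 2 \<and> C = type_code V k P {#(k - 1) div 2, (k + 1) div 2#})
            \<or> (odd k \<and> a = 2 \<and> b \<ge> 3 \<and>
                 C = type_code V k P ({#1#} + replicate_mset ((k - 1) div 2) 2))))
       \<or> (\<exists>P a b k0 C0. uniform_partition V P a b \<and> card V = a * b \<and> a > 1 \<and> b \<ge> 4 \<and>
            k = a * k0 \<and> 1 \<le> k0 \<and> k0 \<le> b - 1 \<and> C0 \<subseteq> ksubsets P k0 \<and>
            C = (\<lambda>S. \<Union>S) ` C0)"
  proof -
  obtain P where P: "partition_on V P \<and> P \<noteq> {V} \<and> P \<noteq> (\<lambda>x. {x}) ` V \<and> (\<forall>g\<in>G. \<forall>U\<in>P. g ` U \<in> P)"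
    using assms(9) unfolding imprimitive_on_def by (elim exE) (rule that)
  interpret ntc V k C G P
  proof
    show "finite V" using assms(1) .
    show "2 \<le> k" using assms(2) .
    show "k + 2 \<le> card V" using assms(3) .
    show "is_code V k C" using assms(4) .
    show "perm_group_on V G" using assms(5) .
    show "stabilises_code G C" using assms(6) .
    show "neighbour_transitive V k G C" using assms(7) .
    show "transitive_on V G" using assms(8) .
    show "partition_on V P" using P by (elim conjE)
    show "P \<noteq> {V}" using P by (elim conjE)
    show "P \<noteq> (\<lambda>x. {x}) ` V" using P by (elim conjE)
    show "\<And>g U. g \<in> G \<Longrightarrow> U \<in> P \<Longrightarrow> g ` U \<in> P" using P by (elim conjE) blast
  qed
  have up: "uniform_partition V P a b" unfolding uniform_partition_def using part finP b_def card_block by auto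
  have ab: "card V = a * b" "a > 1" "b > 1" using vab a2 b2 by auto
  from main_inner show ?thesis
  proof
    assume h: "(k \<le> a \<and> C = type_code V k P {#k#})
            \<or> (k + a \<ge> card V \<and> C = type_code V k P ({#k + a - card V#} + replicate_mset (b - 1) a))
            \<or> (k \<le> b \<and> C = type_code V k P (replicate_mset k 1))
            \<or> (k + b \<ge> card V \<and>
                 C = type_code V k P (replicate_mset (card V - k) (a - 1) + replicate_mset (b + k - card V) a))
            \<or> (\<exists>c. k = c * b \<and> 1 < c \<and> c \<le> a - 1 \<and> C = type_code V k P (replicate_mset b c))
            \<or> (odd k \<and> a \<ge> 3 \<and> b = 2 \<and> C = type_code V k P {#(k - 1) div 2, (k + 1) div 2#})
            \<or> (odd k \<and> a = 2 \<and> b \<ge> 3 \<and>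
                 C = type_code V k P ({#1#} + replicate_mset ((k - 1) div 2) 2))"
    show ?thesis
      by (rule disjI1, rule exI[of _ P], rule exI[of _ a], rule exI[of _ b]) (intro conjI up ab h)
  next
    assume h: "b \<ge> 4 \<and> (\<exists>k0 C0. k = a * k0 \<and> 1 \<le> k0 \<and> k0 \<le> b - 1 \<and> C0 \<subseteq> ksubsets P k0 \<and> C = (\<lambda>S. \<Union>S) ` C0)"
    then obtain k0 C0 where h2: "k = a * k0" "1 \<le> k0" "k0 \<le> b - 1" "C0 \<subseteq> ksubsets P k0" "C = (\<lambda>S. \<Union>S) ` C0" by blast
    show ?thesis
      by (rule disjI2, rule exI[of _ P], rule exI[of _ a], rule exI[of _ b], rule exI[of _ k0], rule exI[of _ C0])
         (intro conjI up ab h2 h[THEN conjunct1])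
  qed
qed

end
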